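(* Let $p$ be an odd prime. If $\lambda$ and $\mu$ are self-conjugate partitions with $\mathcal{BG}_p(\lambda)=\mathcal{BG}_p(\mu)$, then $\lambda=\mu$. That is, the BG-symbol gives an injective map from (nonempty) self-conjugate partitions to two-row arrays of positive integers.
   Context: Partitions: $\lambda=(\lambda_1\ge\lambda_2\ge\cdots)$ with finitely many nonzero parts; $l(\lambda)$ is the number of nonzero parts; Young diagram $[\lambda]=\{(i,j): i\ge1, 1\le j\le\lambda_i\}$ ($i$ = row, increasing downward). $\lambda$ is self-conjugate if it equals its conjugate, i.e. $(i,j)\in[\lambda]\iff(j,i)\in[\lambda]$. Rim and $p$-rim: the rim of $\lambda$ is the set of nodes $(i,j)\in[\lambda]$ with $(i+1,j+1)\notin[\lambda]$. Label the rim nodes $1,2,\dots$ consecutively along the rim path from $(1,\lambda_1)$ to $(l(\lambda),1)$ (top-right to bottom-left). The first $p$-segment consists of rim nodes labelled $1,\dots,p$ (or all if fewer). If the last node $(i,j)$ of a $p$-segment lies in the last row, stop; otherwise, with $l$ the smallest label in row $i+1$, the next $p$-segment is the rim nodes labelled $l,\dots,l+p-1$ (or up to the last label). The $p$-rim is the union of the $p$-segments. $p$-rim* and BG-symbol: for a nonempty self-conjugate $\lambda$ let $U_\lambda=\{(i,j)\in p\text{-rim of }\lambda: i\le j\}$, $L_\lambda=\{(j,i):(i,j)\in U_\lambda\}$, $\mathrm{Rim}^*_p(\lambda)=U_\lambda\cup L_\lambda$, $a^*_\lambda=\#\mathrm{Rim}^*_p(\lambda)$, $r^*_\lambda=\#U_\lambda$.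 Put $\lambda^{(0)*}=\lambda$ and $\lambda^{(i)*}=\lambda^{(i-1)*}\setminus\mathrm{Rim}^*_p(\lambda^{(i-1)*})$ (again self-conjugate), with $l$ maximal such that $\lambda^{(l)*}\ne\emptyset$; write $a^*_i=a^*_{\lambda^{(i)*}}$, $r^*_i=r^*_{\lambda^{(i)*}}$. The BG-symbol is $\mathcal{BG}_p(\lambda)=\begin{pmatrix}a^*_0&\cdots&a^*_l\\ r^*_0&\cdots&r^*_l\end{pmatrix}$. *)

theory Defs
  imports Main "HOL-Computational_Algebra.Primes"
begin

definition is_partition :: "nat list \<Rightarrow> bool" where
  "is_partition xs \<longleftrightarrow> sorted_wrt (\<ge>) xs \<and> 0 \<notin> set xs"

text \<open>Young diagram, 1-based (row i, column j).\<close>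
definition diagram :: "nat list \<Rightarrow> (nat \<times> nat) set" where
  "diagram xs = {(i,j). 1 \<le> i \<and> i \<le> length xs \<and> 1 \<le> j \<and> j \<le> xs ! (i - 1)}"

definition transp_diag :: "(nat \<times> nat) set \<Rightarrow> (nat \<times> nat) set" where
  "transp_diag D = {(j,i). (i,j) \<in> D}"

definition self_conjugate :: "nat list \<Rightarrow> bool" where
  "self_conjugate xs \<longleftrightarrow> transp_diag (diagram xs) = diagram xs"

definition nrows :: "(nat \<times> nat) set \<Rightarrow> nat" where
  "nrows D = card {i. (i,1) \<in> D}"

definition rim :: "(nat \<times> nat) set \<Rightarrow> (nat \<times> nat) set" where
  "rim D = {(i,j) \<in> D. (i+1, j+1) \<notin> D}"

text \<open>Rim nodes listed along the rim path from the top-right to the bottom-left: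
  row by row from top to bottom, within a row from right to left.
  The node with label k is the entry at index k-1.\<close>
definition rim_list :: "(nat \<times> nat) set \<Rightarrow> (nat \<times> nat) list" where
  "rim_list D = concat (map (\<lambda>i. map (\<lambda>j. (i,j)) (rev (sorted_list_of_set {j. (i,j) \<in> rim D})))
                  [1..<nrows D + 1])"

text \<open>Indices (0-based labels) of the p-segments, starting at index s.
  The first argument is fuel (number of rows suffices, since each new segment
  starts in a strictly lower row).\<close>
fun pseg_idx :: "nat \<Rightarrow> nat \<Rightarrow> (nat \<times> nat) list \<Rightarrow> nat \<Rightarrow> nat \<Rightarrow> nat set" where
  "pseg_idx 0 p R l s = {}"
| "pseg_idx (Suc f) p R l s =
     (let e = min (s + p - 1) (length R - 1); i = fst (R ! e) in
      {s..e} \<union> (if i = l then {} else pseg_idx f p R l (LEAST k. k < length R \<and> fst (R ! k) = i + 1)))"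

definition p_rim :: "nat \<Rightarrow> (nat \<times> nat) set \<Rightarrow> (nat \<times> nat) set" where
  "p_rim p D = (let R = rim_list D in (\<lambda>k. R ! k) ` pseg_idx (nrows D) p R (nrows D) 0)"

definition U_set :: "nat \<Rightarrow> (nat \<times> nat) set \<Rightarrow> (nat \<times> nat) set" where
  "U_set p D = {(i,j) \<in> p_rim p D. i \<le> j}"

definition rim_star :: "nat \<Rightarrow> (nat \<times> nat) set \<Rightarrow> (nat \<times> nat) set" where
  "rim_star p D = U_set p D \<union> {(j,i). (i,j) \<in> U_set p D}"

text \<open>Successive columns (a*_i, r*_i); fuel = number of nodes suffices since each
  step removes a nonempty set.\<close>
fun bg_aux :: "nat \<Rightarrow> nat \<Rightarrow> (nat \<times> nat) set \<Rightarrow> (nat \<times> nat) list" where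
  "bg_aux 0 p D = []"
| "bg_aux (Suc f) p D =
     (if D = {} then []
      else (card (rim_star p D), card (U_set p D)) # bg_aux f p (D - rim_star p D))"

text \<open>BG-symbol: the two-row array as the list of its columns (a*_i, r*_i), i = 0..l.\<close>
definition BG_symbol :: "nat \<Rightarrow> nat list \<Rightarrow> (nat \<times> nat) list" where
  "BG_symbol p xs = bg_aux (card (diagram xs)) p (diagram xs)"

end

theory Submission
  imports Defs
begin

definition downset :: "(nat\<times>nat) set \<Rightarrow> bool" where
 "downset D \<longleftrightarrow> finite D \<and> (\<forall>i j. (i,j) \<in> D \<longrightarrow> 1 \<le> i \<and> 1 \<le> j) \<and>
   (\<forall>i j i' j'. (i,j) \<in> D \<and> 1 \<le> i' \<and> i' \<le> i \<and> 1 \<le> j' \<and> j' \<le> j \<longrightarrow> (i',j') \<in> D)"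

definition rl :: "(nat\<times>nat) set \<Rightarrow> nat \<Rightarrow> nat" where
 "rl D i = card {j. (i,j) \<in> D}"

lemma downset_row_eq:
  assumes "downset D" shows "{j. (i,j) \<in> D} = {1..rl D i}"
proof -
  let ?S = "{j. (i,j) \<in> D}"
  have fin: "finite ?S"
  proof -
    have "?S \<subseteq> snd ` D" by force
    moreover have "finite D" using assms by (simp add: downset_def)
    ultimately show ?thesis by (meson finite_imageI finite_subset)
  qed
  show ?thesis
  proof (cases "?S = {}")
    case True then show ?thesis by (simp add: rl_def)
  next
    case False
    have "?S = {1..Max ?S}"
    proof
      show "?S \<subseteq> {1..Max ?S}"
      proof
        fix j assume "j \<in> ?S"
        then have "(i,j) \<in> D" by simp
        then have "1 \<le> j" using assms unfolding downset_def by blast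
        moreover have "j \<le> Max ?S" using fin \<open>j \<in> ?S\<close> by (rule Max_ge)
        ultimately show "j \<in> {1..Max ?S}" by simp
      qed
      show "{1..Max ?S} \<subseteq> ?S"
      proof
        fix j assume j: "j \<in> {1..Max ?S}"
        have "Max ?S \<in> ?S" using fin False by (rule Max_in)
        then have "(i, Max ?S) \<in> D" by simp
        moreover have "1 \<le> i" using \<open>(i, Max ?S) \<in> D\<close> assms unfolding downset_def by blast
        moreover have "1 \<le> j" "j \<le> Max ?S" using j by auto
        ultimately have "(i,j) \<in> D" using assms unfolding downset_def by blast
        then show "j \<in> ?S" by simp
      qed
    qed
    then show ?thesis by (metis card_atLeastAtMost diff_Suc_1 rl_def)
  qed
qed

lemma downset_mem:
  assumes "downset D" shows "(i,j) \<in> D \<longleftrightarrow> 1 \<le> i \<and> 1 \<le> j \<and> j \<le> rl D i"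
proof -
  have "(i,j) \<in> D \<longleftrightarrow> j \<in> {j. (i,j) \<in> D}" by simp
  also have "\<dots> \<longleftrightarrow> j \<in> {1..rl D i}" using downset_row_eq[OF assms] by simp
  finally have *: "(i,j) \<in> D \<longleftrightarrow> 1 \<le> j \<and> j \<le> rl D i" by simp
  show ?thesis
  proof (cases "1 \<le> i")
    case True then show ?thesis using * by simp
  next
    case False
    then have "(i,j) \<notin> D" using assms unfolding downset_def by blast
    then show ?thesis using False by simp
  qed
qed

lemma downclosed_interval:
  fixes S :: "nat set"
  assumes fin: "finite S" and pos: "\<And>x. x \<in> S \<Longrightarrow> 1 \<le> x"
    and dc: "\<And>x y. x \<in> S \<Longrightarrow> 1 \<le> y \<Longrightarrow> y \<le> x \<Longrightarrow> y \<in> S"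
  shows "S = {1..card S}"
proof (cases "S = {}")
  case True then show ?thesis by simp
next
  case False
  have "S = {1..Max S}"
  proof
    show "S \<subseteq> {1..Max S}" using fin pos by (auto intro: Max_ge)
    show "{1..Max S} \<subseteq> S" using dc Max_in[OF fin False] by auto
  qed
  then show ?thesis by (metis card_atLeastAtMost diff_Suc_1)
qed

lemma downset_fin: "downset D \<Longrightarrow> finite D" by (simp add: downset_def)

lemma downset_pos: "downset D \<Longrightarrow> (i,j) \<in> D \<Longrightarrow> 1 \<le> i \<and> 1 \<le> j"
  unfolding downset_def by blast

lemma downset_dc: "downset D \<Longrightarrow> (i,j) \<in> D \<Longrightarrow> 1 \<le> i' \<Longrightarrow> i' \<le> i \<Longrightarrow> 1 \<le> j' \<Longrightarrow> j' \<le> j \<Longrightarrow> (i',j') \<in> D"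
  unfolding downset_def by (elim conjE, erule allE[of _ i], erule allE[of _ j], erule allE[of _ i'], erule allE[of _ j'], simp)

lemma rl_0: assumes "downset D" shows "rl D 0 = 0"
proof -
  have "{j. (0,j) \<in> D} = {}" using downset_pos[OF assms] by fastforce
  then show ?thesis by (simp add: rl_def)
qed

lemma rl_anti:
  assumes "downset D" "1 \<le> i" "i \<le> i'" shows "rl D i' \<le> rl D i"
proof (cases "rl D i' = 0")
  case True then show ?thesis by simp
next
  case False
  have "1 \<le> i'" using assms by linarith
  moreover have "1 \<le> rl D i'" using False by linarith
  ultimately have "(i', rl D i') \<in> D" using downset_mem[OF assms(1), of i' "rl D i'"] by blast
  then have "(i, rl D i') \<in> D" using downset_dc[OF assms(1) _ assms(2,3) \<open>1 \<le> rl D i'\<close>, of "rl D i'"] by blast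
  then show ?thesis using downset_mem[OF assms(1), of i "rl D i'"] by blast
qed

lemma nrows_eq:
  assumes "downset D" shows "{i. (i,1) \<in> D} = {1..nrows D}"
proof -
  have fin: "finite {i. (i,1) \<in> D}"
  proof -
    have "{i. (i,1) \<in> D} \<subseteq> fst ` D" by force
    then show ?thesis using downset_fin[OF assms] by (meson finite_imageI finite_subset)
  qed
  have "{i. (i,1) \<in> D} = {1..card {i. (i,1) \<in> D}}"
  proof (rule downclosed_interval[OF fin])
    fix x assume "x \<in> {i. (i,1) \<in> D}" then show "1 \<le> x" using downset_pos[OF assms] by blast
  next
    fix x y assume "x \<in> {i. (i,1) \<in> D}" "1 \<le> y" "y \<le> x"
    then show "y \<in> {i. (i,1) \<in> D}" using downset_dc[OF assms, of x 1 y 1] by simp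
  qed
  then show ?thesis by (simp add: nrows_def)
qed

lemma rl_pos_iff:
  assumes "downset D" shows "1 \<le> rl D i \<longleftrightarrow> 1 \<le> i \<and> i \<le> nrows D"
proof -
  have "1 \<le> rl D i \<longleftrightarrow> (i,1) \<in> D" using downset_mem[OF assms, of i 1] rl_0[OF assms] by (cases i) auto
  also have "\<dots> \<longleftrightarrow> i \<in> {1..nrows D}" using nrows_eq[OF assms] by blast
  finally show ?thesis by simp
qed

definition symd :: "(nat\<times>nat) set \<Rightarrow> bool" where
  "symd D \<longleftrightarrow> (\<forall>i j. (i,j) \<in> D \<longrightarrow> (j,i) \<in> D)"

definition dd :: "(nat\<times>nat) set \<Rightarrow> nat" where
  "dd D = card {i. (i,i) \<in> D}"

lemma diag_eq:
  assumes "downset D" shows "{i. (i,i) \<in> D} = {1..dd D}"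
proof -
  have fin: "finite {i. (i,i) \<in> D}"
  proof -
    have "{i. (i,i) \<in> D} \<subseteq> fst ` D" by force
    then show ?thesis using downset_fin[OF assms] by (meson finite_imageI finite_subset)
  qed
  have "{i. (i,i) \<in> D} = {1..card {i. (i,i) \<in> D}}"
  proof (rule downclosed_interval[OF fin])
    fix x assume "x \<in> {i. (i,i) \<in> D}" then show "1 \<le> x" using downset_pos[OF assms] by blast
  next
    fix x y assume "x \<in> {i. (i,i) \<in> D}" "1 \<le> y" "y \<le> x"
    then show "y \<in> {i. (i,i) \<in> D}" using downset_dc[OF assms, of x x y y] by simp
  qed
  then show ?thesis by (simp add: dd_def)
qed

lemma diag_iff: assumes "downset D" shows "(i,i) \<in> D \<longleftrightarrow> 1 \<le> i \<and> i \<le> dd D"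
proof -
  have "(i,i) \<in> D \<longleftrightarrow> i \<in> {i. (i,i) \<in> D}" by simp
  then show ?thesis using diag_eq[OF assms] by simp
qed

lemma symd_iff: "symd D \<Longrightarrow> (i,j) \<in> D \<longleftrightarrow> (j,i) \<in> D"
  unfolding symd_def by blast

lemma rl_big_dd:
  assumes "downset D" "symd D" "dd D < x" shows "rl D x \<le> dd D"
proof (rule ccontr)
  assume "\<not> rl D x \<le> dd D"
  then have "(x, dd D + 1) \<in> D" using downset_mem[OF assms(1), of x "dd D + 1"] assms(3) by auto
  then have "(dd D + 1, dd D + 1) \<in> D" using downset_dc[OF assms(1), of x "dd D + 1" "dd D + 1" "dd D + 1"] assms(3) by auto
  then show False using diag_iff[OF assms(1), of "dd D + 1"] by auto
qed

lemma rl_dd: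
  assumes "downset D" "1 \<le> x" "x \<le> dd D" shows "dd D \<le> rl D x"
proof -
  have "(dd D, dd D) \<in> D" using diag_iff[OF assms(1), of "dd D"] assms by auto
  then have "(x, dd D) \<in> D" using downset_dc[OF assms(1), of "dd D" "dd D" x "dd D"] assms by auto
  then show ?thesis using downset_mem[OF assms(1), of x "dd D"] by auto
qed

lemma nrows_sym:
  assumes "downset D" "symd D" shows "nrows D = rl D 1"
proof -
  have "{i. (i,1) \<in> D} = {i. (1,i) \<in> D}"
    using symd_iff[OF assms(2)] by blast
  also have "\<dots> = {1..rl D 1}" using downset_row_eq[OF assms(1), of 1] by simp
  finally have "{i. (i,1) \<in> D} = {1..rl D 1}" .
  then show ?thesis using nrows_eq[OF assms(1)] by (metis card_atLeastAtMost diff_Suc_1)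
qed

lemma concat_upt_len:
  "length (concat (map g [1..<N+1])) = (\<Sum>x\<in>{1..<N+1}. length (g x))"
proof (induction N)
  case 0 then show ?case by simp
next
  case (Suc N)
  have "[1..<Suc N + 1] = [1..<N+1] @ [N+1]" by simp
  then show ?case using Suc by simp
qed

lemma sum_upt_mono:
  fixes f :: "nat \<Rightarrow> nat"
  assumes "a \<le> b" shows "(\<Sum>x\<in>{1..<a}. f x) \<le> (\<Sum>x\<in>{1..<b}. f x)"
  by (rule sum_mono2) (use assms in auto)

lemma concat_upt_nth:
  assumes "1 \<le> i" "i \<le> N" "c < length (g i)"
  shows "concat (map g [1..<N+1]) ! ((\<Sum>x\<in>{1..<i}. length (g x)) + c) = g i ! c"
  using assms
proof (induction N)
  case 0 then show ?case by simp
next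
  case (Suc N)
  have eq: "[1..<Suc N + 1] = [1..<N+1] @ [N+1]" by simp
  show ?case
  proof (cases "i \<le> N")
    case True
    have "(\<Sum>x\<in>{1..<i}. length (g x)) + c < (\<Sum>x\<in>{1..<i+1}. length (g x))"
      using Suc.prems by simp
    also have "\<dots> \<le> (\<Sum>x\<in>{1..<N+1}. length (g x))" by (rule sum_upt_mono) (use True in simp)
    finally have lt: "(\<Sum>x\<in>{1..<i}. length (g x)) + c < length (concat (map g [1..<N+1]))"
      using concat_upt_len by metis
    show ?thesis unfolding eq using Suc.IH[OF Suc.prems(1) True Suc.prems(3)] lt
      by (simp add: nth_append)
  next
    case False
    then have "i = N + 1" using Suc.prems by simp
    then show ?thesis unfolding eq using concat_upt_len[of g N] Suc.prems
      by (simp add: nth_append)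
  qed
qed

lemma rev_upt_nth: "c < n - a \<Longrightarrow> rev [a..<n] ! c = n - 1 - c"
  by (simp add: rev_nth)

definition lenr :: "(nat\<times>nat) set \<Rightarrow> nat \<Rightarrow> nat" where
  "lenr D i = rl D i + 1 - max 1 (rl D (Suc i))"

definition Sx :: "(nat\<times>nat) set \<Rightarrow> nat \<Rightarrow> nat" where
  "Sx D i = (\<Sum>x\<in>{1..<i}. lenr D x)"

definition rrow :: "(nat\<times>nat) set \<Rightarrow> nat \<Rightarrow> (nat\<times>nat) list" where
  "rrow D i = map (\<lambda>j. (i,j)) (rev [max 1 (rl D (Suc i))..<rl D i + 1])"

lemma rim_row:
  assumes "downset D" shows "{j. (i,j) \<in> rim D} = {max 1 (rl D (Suc i))..<rl D i + 1}"
proof (cases "i = 0")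
  case True
  then show ?thesis using rl_0[OF assms] downset_pos[OF assms] by (auto simp: rim_def)
next
  case False
  have "(i,j) \<in> rim D \<longleftrightarrow> j \<in> {max 1 (rl D (Suc i))..<rl D i + 1}" for j
    using downset_mem[OF assms, of i j] downset_mem[OF assms, of "i+1" "j+1"] False
    by (auto simp: rim_def)
  then show ?thesis by blast
qed

lemma rim_list_eq:
  assumes "downset D" shows "rim_list D = concat (map (rrow D) [1..<nrows D + 1])"
  unfolding rim_list_def rrow_def using rim_row[OF assms] by simp

lemma length_rrow: "length (rrow D i) = lenr D i"
  unfolding rrow_def lenr_def by (simp only: length_map length_rev length_upt)

lemma length_rim_list:
  assumes "downset D" shows "length (rim_list D) = Sx D (nrows D + 1)"
  unfolding rim_list_eq[OF assms] concat_upt_len Sx_def length_rrow by simp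

lemma lenr_pos:
  assumes "downset D" "1 \<le> i" "i \<le> nrows D" shows "1 \<le> lenr D i"
proof -
  have "1 \<le> rl D i" using rl_pos_iff[OF assms(1)] assms by blast
  moreover have "rl D (Suc i) \<le> rl D i" using rl_anti[OF assms(1) assms(2)] by simp
  ultimately show ?thesis unfolding lenr_def by simp
qed

lemma rim_list_nth:
  assumes "downset D" "1 \<le> i" "i \<le> nrows D" "c < lenr D i"
  shows "rim_list D ! (Sx D i + c) = (i, rl D i - c)"
proof -
  have "rim_list D ! (Sx D i + c) = rrow D i ! c"
    unfolding rim_list_eq[OF assms(1)] Sx_def
    using concat_upt_nth[of i "nrows D" c "rrow D"] assms by (simp add: length_rrow)
  also have "\<dots> = (i, rl D i - c)"
  proof -
    have "1 \<le> rl D i" using rl_pos_iff[OF assms(1)] assms by blast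
    moreover have "rl D (Suc i) \<le> rl D i" using rl_anti[OF assms(1) assms(2)] by simp
    ultimately show ?thesis using assms(4) unfolding rrow_def lenr_def
      using rev_upt_nth[of c "rl D i + 1" "max 1 (rl D (Suc i))"]
      by (simp del: upt_Suc)
  qed
  finally show ?thesis .
qed

lemma Sx_Suc: "1 \<le> i \<Longrightarrow> Sx D (Suc i) = Sx D i + lenr D i"
  unfolding Sx_def by simp

lemma Sx_1: "Sx D 1 = 0" by (simp add: Sx_def)

lemma Sx_mono: "i \<le> i' \<Longrightarrow> Sx D i \<le> Sx D i'"
  unfolding Sx_def by (rule sum_upt_mono)

lemma Sx_strict:
  assumes "downset D" "1 \<le> i" "i < i'" "i' \<le> nrows D + 1" shows "Sx D i < Sx D i'"
proof -
  have "Sx D i < Sx D (Suc i)" using Sx_Suc[OF assms(2)] lenr_pos[OF assms(1,2)] assms by simp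
  also have "\<dots> \<le> Sx D i'" using Sx_mono assms by simp
  finally show ?thesis .
qed

lemma idx_decomp:
  assumes "downset D" "k < Sx D i" "i \<le> nrows D + 1"
  shows "\<exists>x c. 1 \<le> x \<and> x < i \<and> c < lenr D x \<and> k = Sx D x + c"
  using assms(2,3)
proof (induction i)
  case 0 then show ?case by (simp add: Sx_def)
next
  case (Suc i)
  show ?case
  proof (cases "i = 0")
    case True then show ?thesis using Suc by (simp add: Sx_def)
  next
    case False
    show ?thesis
    proof (cases "k < Sx D i")
      case True
      then show ?thesis using Suc.IH Suc.prems by fastforce
    next
      case False
      then have "k - Sx D i < lenr D i" using Suc.prems Sx_Suc[of i D] \<open>i \<noteq> 0\<close> by simp
      then show ?thesis using False \<open>i \<noteq> 0\<close>
        by (intro exI[of _ i] exI[of _ "k - Sx D i"]) simp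
    qed
  qed
qed

lemma row_of_idx:
  assumes "downset D" "1 \<le> x" "x \<le> nrows D" "Sx D x \<le> k" "k < Sx D (Suc x)"
  shows "rim_list D ! k = (x, rl D x - (k - Sx D x))"
proof -
  have "k - Sx D x < lenr D x" using assms Sx_Suc[of x D] by simp
  then show ?thesis using rim_list_nth[OF assms(1-3), of "k - Sx D x"] assms(4) by simp
qed

lemma fst_nth_lt:
  assumes "downset D" "1 \<le> i" "i \<le> nrows D" "k < Sx D i"
  shows "fst (rim_list D ! k) < i"
proof -
  obtain x c where xc: "1 \<le> x" "x < i" "c < lenr D x" "k = Sx D x + c"
    using idx_decomp[OF assms(1) assms(4)] assms by fastforce
  then show ?thesis using rim_list_nth[OF assms(1), of x c] assms by simp
qed

lemma least_row:
  assumes "downset D" "1 \<le> i" "i \<le> nrows D"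
  shows "(LEAST k. k < length (rim_list D) \<and> fst (rim_list D ! k) = i) = Sx D i"
proof (rule Least_equality)
  have "Sx D i < Sx D (nrows D + 1)" using Sx_strict[OF assms(1,2)] assms by simp
  then show "Sx D i < length (rim_list D) \<and> fst (rim_list D ! Sx D i) = i"
    using length_rim_list[OF assms(1)] rim_list_nth[OF assms, of 0] lenr_pos[OF assms] by simp
next
  fix y assume "y < length (rim_list D) \<and> fst (rim_list D ! y) = i"
  then show "Sx D i \<le> y" using fst_nth_lt[OF assms, of y] by (meson less_irrefl not_le)
qed

lemma idx_row:
  assumes "downset D" "k < length (rim_list D)"
  shows "1 \<le> fst (rim_list D ! k) \<and> fst (rim_list D ! k) \<le> nrows D \<and>
         Sx D (fst (rim_list D ! k)) \<le> k \<and> k < Sx D (Suc (fst (rim_list D ! k)))"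
proof -
  obtain x c where xc: "1 \<le> x" "x < nrows D + 1" "c < lenr D x" "k = Sx D x + c"
    using idx_decomp[OF assms(1), of k "nrows D + 1"] assms length_rim_list[OF assms(1)] by auto
  then have "fst (rim_list D ! k) = x" using rim_list_nth[OF assms(1), of x c] by simp
  then show ?thesis using xc Sx_Suc[of x D] by simp
qed

lemma pseg_unfold:
  fixes p f :: nat
  assumes "downset D" "1 \<le> i" "i \<le> nrows D"
  defines "R \<equiv> rim_list D" and "n \<equiv> nrows D"
  defines "e \<equiv> min (Sx D i + p - 1) (length R - 1)"
  shows "pseg_idx (Suc f) p R n (Sx D i) =
    {Sx D i..e} \<union> (if fst (R!e) = n then {} else pseg_idx f p R n (Sx D (Suc (fst (R!e)))))"
proof -
  have lt: "Sx D i < length R" using Sx_strict[OF assms(1,2), of "nrows D + 1"] assms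
      length_rim_list[OF assms(1)] by simp
  then have "e < length R" unfolding e_def by simp
  then have rb: "1 \<le> fst (R!e)" "fst (R!e) \<le> n" using idx_row[OF assms(1)] unfolding R_def n_def by blast+
  show ?thesis
  proof (cases "fst (R!e) = n")
    case True then show ?thesis by (simp add: Let_def e_def)
  next
    case False
    then have "(LEAST k. k < length R \<and> fst (R ! k) = fst (R!e) + 1) = Sx D (Suc (fst (R!e)))"
      using least_row[OF assms(1), of "fst (R!e) + 1"] rb unfolding R_def n_def by simp
    then show ?thesis using False by (simp add: Let_def e_def)
  qed
qed

lemma pseg_sub:
  assumes "downset D" "1 \<le> p"
  shows "1 \<le> i \<Longrightarrow> i \<le> nrows D \<Longrightarrow>
    pseg_idx f p (rim_list D) (nrows D) (Sx D i) \<subseteq> {Sx D i..<length (rim_list D)}"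
proof (induction f arbitrary: i)
  case 0 then show ?case by simp
next
  case (Suc f)
  define R where "R = rim_list D"
  define e where "e = min (Sx D i + p - 1) (length R - 1)"
  have lt: "Sx D i < length R" using Sx_strict[OF assms(1) Suc.prems(1), of "nrows D + 1"] Suc.prems
      length_rim_list[OF assms(1)] unfolding R_def by simp
  then have el: "e < length R" "Sx D i \<le> e" unfolding e_def using assms(2) by auto
  have rb: "1 \<le> fst (R!e)" "fst (R!e) \<le> nrows D" "Sx D (fst (R!e)) \<le> e" "e < Sx D (Suc (fst (R!e)))"
    using idx_row[OF assms(1) el(1)[unfolded R_def]] unfolding R_def by auto
  have "pseg_idx (Suc f) p R (nrows D) (Sx D i) =
    {Sx D i..e} \<union> (if fst (R!e) = nrows D then {} else pseg_idx f p R (nrows D) (Sx D (Suc (fst (R!e)))))"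
    using pseg_unfold[OF assms(1) Suc.prems, where p=p and f=f] unfolding R_def e_def by simp
  moreover have "{Sx D i..e} \<subseteq> {Sx D i..<length R}" using el by auto
  moreover have "fst (R!e) \<noteq> nrows D \<Longrightarrow> pseg_idx f p R (nrows D) (Sx D (Suc (fst (R!e)))) \<subseteq> {Sx D i..<length R}"
  proof -
    assume "fst (R!e) \<noteq> nrows D"
    then have "pseg_idx f p R (nrows D) (Sx D (Suc (fst (R!e)))) \<subseteq> {Sx D (Suc (fst (R!e)))..<length R}"
      using Suc.IH[of "Suc (fst (R!e))"] rb unfolding R_def by simp
    then show ?thesis using rb el by auto
  qed
  ultimately show ?case unfolding R_def by auto
qed

lemma sum_split_nat:
  fixes f :: "nat \<Rightarrow> nat"
  assumes "i \<le> Suc j" "j \<le> d"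
  shows "sum f {i..d} = sum f {i..j} + sum f {Suc j..d}"
proof -
  have "{i..d} = {i..j} \<union> {Suc j..d}" using assms by auto
  moreover have "{i..j} \<inter> {Suc j..d} = {}" by auto
  ultimately show ?thesis by (simp add: sum.union_disjoint)
qed

lemma sum_last_nat:
  fixes f :: "nat \<Rightarrow> nat"
  assumes "i \<le> j" shows "sum f {i..j} = sum f {i..<j} + f j"
proof -
  have "{i..j} = insert j {i..<j}" using assms by auto
  then show ?thesis by simp
qed

definition SEG :: "nat \<Rightarrow> nat \<Rightarrow> (nat\<Rightarrow>nat) \<Rightarrow> (nat\<Rightarrow>nat) \<Rightarrow> nat \<Rightarrow> nat set \<Rightarrow> nat \<Rightarrow> bool" where
 "SEG p d lam k L E i0 \<longleftrightarrow> E \<subseteq> {i0..d} \<and> d \<in> E \<and> (\<forall>x\<in>{i0..d}. 1 \<le> k x) \<and>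
   (\<forall>x\<in>{i0..d}. x \<notin> E \<longrightarrow> k x + lam (Suc x) = lam x + 1) \<and>
   (\<forall>x\<in>E. x < d \<longrightarrow> k x + lam (Suc x) \<le> lam x + 1) \<and> k d + d \<le> lam d + 1 \<and>
   (\<forall>j\<in>E. \<exists>i\<in>{i0..j}. (\<forall>x\<in>{i..<j}. x \<notin> E) \<and> (i = i0 \<or> i - 1 \<in> E) \<and>
        sum k {i..j} = (if j = d then L else p)) \<and>
   1 \<le> L \<and> L \<le> p \<and> sum k {i0..d} + p = p * card E + L"

definition ul :: "(nat\<times>nat) set \<Rightarrow> nat \<Rightarrow> nat" where
  "ul D x = (if x < dd D then lenr D x else rl D (dd D) + 1 - dd D)"

definition mm :: "(nat\<times>nat) set \<Rightarrow> nat" where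
  "mm D = Sx D (dd D) + ul D (dd D)"

locale sdown =
  fixes D :: "(nat\<times>nat) set"
  assumes ds: "downset D" and sy: "symd D" and ne: "D \<noteq> {}"
begin

lemma d1: "1 \<le> dd D"
proof -
  obtain a b where "(a,b) \<in> D" using ne by auto
  then have "1 \<le> a" "1 \<le> b" using downset_pos[OF ds] by auto
  then have "(1,1) \<in> D" using downset_dc[OF ds \<open>(a,b) \<in> D\<close>, of 1 1] by auto
  then show ?thesis using diag_iff[OF ds, of 1] by simp
qed

lemma dn: "dd D \<le> nrows D"
proof -
  have "(dd D, dd D) \<in> D" using diag_iff[OF ds, of "dd D"] d1 by simp
  then have "1 \<le> rl D (dd D)" using downset_mem[OF ds, of "dd D" "dd D"] d1 by simp
  then show ?thesis using rl_pos_iff[OF ds] by blast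
qed

lemma rl_ge: "1 \<le> x \<Longrightarrow> x \<le> dd D \<Longrightarrow> dd D \<le> rl D x"
  by (rule rl_dd[OF ds])

lemma lenr_up:
  assumes "1 \<le> x" "x < dd D"
  shows "lenr D x = rl D x + 1 - rl D (Suc x)" "rl D (Suc x) \<le> rl D x" "dd D \<le> rl D (Suc x)"
proof -
  show "dd D \<le> rl D (Suc x)" using rl_ge[of "Suc x"] assms by simp
  then have "1 \<le> rl D (Suc x)" using d1 by simp
  then show "lenr D x = rl D x + 1 - rl D (Suc x)" unfolding lenr_def by simp
  show "rl D (Suc x) \<le> rl D x" using rl_anti[OF ds assms(1)] by simp
qed

lemma ul_pos: "1 \<le> x \<Longrightarrow> x \<le> dd D \<Longrightarrow> 1 \<le> ul D x"
  unfolding ul_def using lenr_pos[OF ds] dn rl_ge[of "dd D"] d1 by auto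

lemma ul_lenr: "1 \<le> x \<Longrightarrow> x \<le> dd D \<Longrightarrow> ul D x \<le> lenr D x"
proof -
  assume a: "1 \<le> x" "x \<le> dd D"
  have "rl D (Suc (dd D)) \<le> dd D" using rl_big_dd[OF ds sy] by simp
  then show ?thesis using a d1 unfolding ul_def lenr_def by auto
qed

lemma ul_eq: "1 \<le> x \<Longrightarrow> x < dd D \<Longrightarrow> ul D x + rl D (Suc x) = rl D x + 1"
  using lenr_up[of x] unfolding ul_def by simp

lemma ul_d: "ul D (dd D) + dd D = rl D (dd D) + 1"
  using rl_ge[of "dd D"] d1 unfolding ul_def by simp

lemma Sx_up: "1 \<le> x \<Longrightarrow> x < dd D \<Longrightarrow> Sx D (Suc x) = Sx D x + ul D x"
  using Sx_Suc[of x D] unfolding ul_def by simp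

lemma mm_le: "mm D \<le> Sx D (Suc (dd D))" "Sx D (Suc (dd D)) \<le> length (rim_list D)"
proof -
  show "mm D \<le> Sx D (Suc (dd D))" unfolding mm_def using Sx_Suc[of "dd D" D] ul_lenr[of "dd D"] d1 by simp
  show "Sx D (Suc (dd D)) \<le> length (rim_list D)" using length_rim_list[OF ds] Sx_mono dn by simp
qed

lemma Sx_lt_mm: "i \<le> dd D \<Longrightarrow> Sx D i < mm D"
  unfolding mm_def using Sx_mono[of i "dd D" D] ul_pos[of "dd D"] d1 by simp

lemma upper_iff:
  assumes "k < length (rim_list D)"
  shows "fst (rim_list D ! k) \<le> snd (rim_list D ! k) \<longleftrightarrow> k < mm D"
proof -
  define x where "x = fst (rim_list D ! k)"
  have xb: "1 \<le> x" "x \<le> nrows D" "Sx D x \<le> k" "k < Sx D (Suc x)"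
    using idx_row[OF ds assms] unfolding x_def by auto
  have nth: "rim_list D ! k = (x, rl D x - (k - Sx D x))" using row_of_idx[OF ds xb] .
  have c: "k - Sx D x < lenr D x" using xb Sx_Suc[of x D] by simp
  consider "x < dd D" | "x = dd D" | "dd D < x" by linarith
  then show ?thesis
  proof cases
    case 1
    have "k < Sx D (dd D)" using xb Sx_mono[of "Suc x" "dd D" D] 1 by simp
    then have "k < mm D" unfolding mm_def by simp
    moreover have "x \<le> rl D x - (k - Sx D x)" using c lenr_up[OF xb(1) 1] 1 by simp
    ultimately show ?thesis using nth by simp
  next
    case 2
    have "x \<le> rl D x - (k - Sx D x) \<longleftrightarrow> k - Sx D x < ul D x"
      using 2 rl_ge[of x] xb unfolding ul_def by auto
    also have "\<dots> \<longleftrightarrow> k < mm D" unfolding mm_def using 2 xb by auto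
    finally show ?thesis using nth by simp
  next
    case 3
    have "mm D \<le> Sx D x" using mm_le(1) Sx_mono[of "Suc (dd D)" x D] 3 by simp
    moreover have "rl D x \<le> dd D" using rl_big_dd[OF ds sy 3] .
    ultimately show ?thesis using nth xb 3 by auto
  qed
qed

lemma tele:
  assumes "1 \<le> i" "i \<le> j" "j \<le> dd D"
  shows "(\<Union>x\<in>{i..<j}. {Sx D x..<Sx D x + ul D x}) = {Sx D i..<Sx D j} \<and> sum (ul D) {i..<j} + Sx D i = Sx D j"
  using assms(2,3)
proof (induction j)
  case 0 then show ?case by simp
next
  case (Suc j)
  show ?case
  proof (cases "i = Suc j")
    case True then show ?thesis by simp
  next
    case False
    then have ij: "i \<le> j" "j < dd D" using Suc.prems by auto
    have IH: "(\<Union>x\<in>{i..<j}. {Sx D x..<Sx D x + ul D x}) = {Sx D i..<Sx D j}"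
        "sum (ul D) {i..<j} + Sx D i = Sx D j" using Suc.IH ij by auto
    have s: "Sx D (Suc j) = Sx D j + ul D j" using Sx_up[of j] ij assms by simp
    have "{i..<Suc j} = insert j {i..<j}" using ij by auto
    then have "(\<Union>x\<in>{i..<Suc j}. {Sx D x..<Sx D x + ul D x}) = {Sx D j..<Sx D j + ul D j} \<union> {Sx D i..<Sx D j}"
      using IH by auto
    also have "\<dots> = {Sx D i..<Sx D (Suc j)}" using s Sx_mono[of i j D] ij by auto
    finally show ?thesis using IH s ij by simp
  qed
qed


lemma seg_exists:
  assumes p1: "1 \<le> p"
  shows "1 \<le> i \<Longrightarrow> i \<le> dd D \<Longrightarrow> dd D - i < f \<Longrightarrow>
    \<exists>k E L. pseg_idx f p (rim_list D) (nrows D) (Sx D i) \<inter> {..<mm D} = (\<Union>x\<in>{i..dd D}. {Sx D x..<Sx D x + k x})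
       \<and> SEG p (dd D) (rl D) k L E i"
proof (induction f arbitrary: i)
  case 0 then show ?case by simp
next
  case (Suc f)
  have i1: "1 \<le> i" and id: "i \<le> dd D" using Suc.prems by auto
  have inr: "i \<le> nrows D" using id dn by simp
  define e where "e = min (Sx D i + p - 1) (length (rim_list D) - 1)"
  define j where "j = fst (rim_list D ! e)"
  define rest where "rest = (if j = nrows D then {} else pseg_idx f p (rim_list D) (nrows D) (Sx D (Suc j)))"
  have unf: "pseg_idx (Suc f) p (rim_list D) (nrows D) (Sx D i) = {Sx D i..e} \<union> rest"
    using pseg_unfold[OF ds i1 inr, where p=p and f=f] unfolding e_def rest_def j_def by simp
  have iS: "Sx D i < mm D" using Sx_lt_mm id by simp
  have lenR: "mm D \<le> length (rim_list D)" using mm_le by simp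
  have el: "e < length (rim_list D)" "Sx D i \<le> e" unfolding e_def using iS lenR p1 by auto
  have jb: "1 \<le> j" "j \<le> nrows D" "Sx D j \<le> e" "e < Sx D (Suc j)"
    using idx_row[OF ds el(1)] unfolding j_def by auto
  have rest_sub: "rest \<subseteq> {Sx D (Suc j)..}"
  proof (cases "j = nrows D")
    case True then show ?thesis unfolding rest_def by simp
  next
    case False
    then show ?thesis unfolding rest_def using pseg_sub[OF ds p1, of "Suc j" f] jb by auto
  qed
  have ji: "i \<le> j"
  proof (rule ccontr)
    assume "\<not> i \<le> j"
    then have "Sx D (Suc j) \<le> Sx D i" using Sx_mono by simp
    then show False using jb el by simp
  qed
  show ?case
  proof (cases "mm D \<le> Sx D i + p")
    case True
    have em: "mm D - 1 \<le> e" unfolding e_def using True lenR by auto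
    have r0: "rest \<inter> {..<mm D} = {}" using rest_sub jb em by fastforce
    have lhs: "pseg_idx (Suc f) p (rim_list D) (nrows D) (Sx D i) \<inter> {..<mm D} = {Sx D i..<mm D}"
      unfolding unf using r0 em iS by auto
    have T: "(\<Union>x\<in>{i..<dd D}. {Sx D x..<Sx D x + ul D x}) = {Sx D i..<Sx D (dd D)}"
        "sum (ul D) {i..<dd D} + Sx D i = Sx D (dd D)" using tele[OF i1 id] by auto
    have "{i..dd D} = insert (dd D) {i..<dd D}" using id by auto
    then have U: "(\<Union>x\<in>{i..dd D}. {Sx D x..<Sx D x + ul D x}) = {Sx D i..<mm D}"
      using T Sx_mono[of i "dd D" D] id unfolding mm_def by auto
    have sm: "sum (ul D) {i..dd D} = mm D - Sx D i"
      using T sum_last_nat[OF id, of "ul D"] unfolding mm_def by simp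
    have "SEG p (dd D) (rl D) (ul D) (mm D - Sx D i) {dd D} i"
      unfolding SEG_def
    proof (intro conjI)
      show "{dd D} \<subseteq> {i..dd D}" using id by simp
      show "\<forall>x\<in>{i..dd D}. 1 \<le> ul D x" using ul_pos i1 by auto
      show "\<forall>x\<in>{i..dd D}. x \<notin> {dd D} \<longrightarrow> ul D x + rl D (Suc x) = rl D x + 1"
        using ul_eq i1 by auto
      show "ul D (dd D) + dd D \<le> rl D (dd D) + 1" using ul_d by simp
      show "\<forall>ja\<in>{dd D}. \<exists>ia\<in>{i..ja}. (\<forall>x\<in>{ia..<ja}. x \<notin> {dd D}) \<and> (ia = i \<or> ia - 1 \<in> {dd D}) \<and>
          sum (ul D) {ia..ja} = (if ja = dd D then mm D - Sx D i else p)"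
        using sm id by auto
      show "1 \<le> mm D - Sx D i" using iS by simp
      show "mm D - Sx D i \<le> p" using True by simp
      show "sum (ul D) {i..dd D} + p = p * card {dd D} + (mm D - Sx D i)" using sm by simp
    qed auto
    then show ?thesis using lhs U by metis
  next
    case False
    have ee: "e = Sx D i + p - 1" unfolding e_def using False lenR by auto
    have em: "e < mm D" using ee False p1 by simp
    have jd: "j \<le> dd D"
    proof (rule ccontr)
      assume "\<not> j \<le> dd D"
      then have "Sx D (Suc (dd D)) \<le> Sx D j" using Sx_mono by simp
      then show False using mm_le(1) jb em by simp
    qed
    have T: "(\<Union>x\<in>{i..<j}. {Sx D x..<Sx D x + ul D x}) = {Sx D i..<Sx D j}"
        "sum (ul D) {i..<j} + Sx D i = Sx D j" using tele[OF i1 ji jd] by auto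
    define kj where "kj = e + 1 - Sx D j"
    have kj1: "1 \<le> kj" using jb unfolding kj_def by simp
    have blk: "{Sx D i..e} = {Sx D i..<Sx D j} \<union> {Sx D j..<Sx D j + kj}"
      unfolding kj_def using jb Sx_mono[of i j D] ji by auto
    show ?thesis
    proof (cases "j = dd D")
      case True
      have r0: "rest \<inter> {..<mm D} = {}" using rest_sub mm_le(1) True by fastforce
      have lhs: "pseg_idx (Suc f) p (rim_list D) (nrows D) (Sx D i) \<inter> {..<mm D} = {Sx D i..e}"
        unfolding unf using r0 em by auto
      define k where "k = (\<lambda>x. if x < dd D then ul D x else kj)"
      have "{i..dd D} = insert (dd D) {i..<dd D}" using id by auto
      then have U: "(\<Union>x\<in>{i..dd D}. {Sx D x..<Sx D x + k x}) = {Sx D i..e}"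
        using T blk True unfolding k_def by auto
      have "sum k {i..<dd D} = sum (ul D) {i..<dd D}" unfolding k_def by (rule sum.cong) auto
      then have sm: "sum k {i..dd D} = p"
        using T sum_last_nat[OF id, of k] True ee p1 jb unfolding k_def kj_def by simp
      have kd: "kj \<le> ul D (dd D)" using em True jb unfolding kj_def mm_def by simp
      have "SEG p (dd D) (rl D) k p {dd D} i"
        unfolding SEG_def
      proof (intro conjI)
        show "{dd D} \<subseteq> {i..dd D}" using id by simp
        show "\<forall>x\<in>{i..dd D}. 1 \<le> k x" using ul_pos i1 kj1 unfolding k_def by auto
        show "\<forall>x\<in>{i..dd D}. x \<notin> {dd D} \<longrightarrow> k x + rl D (Suc x) = rl D x + 1"
          using ul_eq i1 unfolding k_def by auto
        show "k (dd D) + dd D \<le> rl D (dd D) + 1" using ul_d kd unfolding k_def by simp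
        show "\<forall>ja\<in>{dd D}. \<exists>ia\<in>{i..ja}. (\<forall>x\<in>{ia..<ja}. x \<notin> {dd D}) \<and> (ia = i \<or> ia - 1 \<in> {dd D}) \<and>
            sum k {ia..ja} = (if ja = dd D then p else p)"
          using sm id by auto
        show "sum k {i..dd D} + p = p * card {dd D} + p" using sm by simp
      qed (use p1 in auto)
      then show ?thesis using lhs U by metis
    next
      case False
      then have jd': "j < dd D" using jd by simp
      have jn: "j \<noteq> nrows D" using jd' dn by simp
      have "dd D - Suc j < f" using Suc.prems ji jd' by simp
      then obtain k' E' L' where
        IH1: "pseg_idx f p (rim_list D) (nrows D) (Sx D (Suc j)) \<inter> {..<mm D} = (\<Union>x\<in>{Suc j..dd D}. {Sx D x..<Sx D x + k' x})"
        and IH2: "SEG p (dd D) (rl D) k' L' E' (Suc j)"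
        using Suc.IH[of "Suc j"] jd' by auto
      have lhs: "pseg_idx (Suc f) p (rim_list D) (nrows D) (Sx D i) \<inter> {..<mm D} =
          {Sx D i..e} \<union> (\<Union>x\<in>{Suc j..dd D}. {Sx D x..<Sx D x + k' x})"
        unfolding unf using IH1 em jn unfolding rest_def by auto
      define k where "k = (\<lambda>x. if x < j then ul D x else if x = j then kj else k' x)"
      have "{i..dd D} = {i..<j} \<union> {j} \<union> {Suc j..dd D}" using ji jd' by auto
      then have U: "(\<Union>x\<in>{i..dd D}. {Sx D x..<Sx D x + k x}) =
           {Sx D i..e} \<union> (\<Union>x\<in>{Suc j..dd D}. {Sx D x..<Sx D x + k' x})"
        using T blk unfolding k_def by auto
      have "sum k {i..<j} = sum (ul D) {i..<j}" unfolding k_def by (rule sum.cong) auto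
      then have smj: "sum k {i..j} = p"
        using T sum_last_nat[OF ji, of k] ee p1 jb unfolding k_def kj_def by simp
      have smr: "sum k {Suc j..dd D} = sum k' {Suc j..dd D}" unfolding k_def by (rule sum.cong) auto
      have S: "E' \<subseteq> {Suc j..dd D}" "dd D \<in> E'" "\<forall>x\<in>{Suc j..dd D}. 1 \<le> k' x"
        "\<forall>x\<in>{Suc j..dd D}. x \<notin> E' \<longrightarrow> k' x + rl D (Suc x) = rl D x + 1"
        "\<forall>x\<in>E'. x < dd D \<longrightarrow> k' x + rl D (Suc x) \<le> rl D x + 1" "k' (dd D) + dd D \<le> rl D (dd D) + 1"
        "\<forall>ja\<in>E'. \<exists>ia\<in>{Suc j..ja}. (\<forall>x\<in>{ia..<ja}. x \<notin> E') \<and> (ia = Suc j \<or> ia - 1 \<in> E') \<and>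
            sum k' {ia..ja} = (if ja = dd D then L' else p)"
        "1 \<le> L'" "L' \<le> p" "sum k' {Suc j..dd D} + p = p * card E' + L'"
        using IH2 unfolding SEG_def by auto
      have jE: "j \<notin> E'" using S(1) by auto
      have finE: "finite E'" using S(1) finite_subset by blast
      have kjl: "kj + rl D (Suc j) \<le> rl D j + 1"
        using jb Sx_Suc[of j D] lenr_up[OF jb(1) jd'] unfolding kj_def by simp
      have "SEG p (dd D) (rl D) k L' (insert j E') i"
        unfolding SEG_def
      proof (intro conjI)
        show "insert j E' \<subseteq> {i..dd D}" using S(1) ji jd' by auto
        show "dd D \<in> insert j E'" using S(2) by simp
        show "\<forall>x\<in>{i..dd D}. 1 \<le> k x" using ul_pos i1 kj1 S(3) jd' unfolding k_def by auto
        show "\<forall>x\<in>{i..dd D}. x \<notin> insert j E' \<longrightarrow> k x + rl D (Suc x) = rl D x + 1"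
        proof (intro ballI impI)
          fix x assume x: "x \<in> {i..dd D}" "x \<notin> insert j E'"
          show "k x + rl D (Suc x) = rl D x + 1"
          proof (cases "x < j")
            case True then show ?thesis using ul_eq[of x] i1 x jd' unfolding k_def by auto
          next
            case False
            then have "x \<in> {Suc j..dd D}" using x by auto
            then show ?thesis using S(4) x False unfolding k_def by auto
          qed
        qed
        show "\<forall>x\<in>insert j E'. x < dd D \<longrightarrow> k x + rl D (Suc x) \<le> rl D x + 1"
        proof (intro ballI impI)
          fix x assume x: "x \<in> insert j E'" "x < dd D"
          show "k x + rl D (Suc x) \<le> rl D x + 1"
          proof (cases "x = j")
            case True then show ?thesis using kjl unfolding k_def by simp
          next
            case False
            then have "x \<in> E'" "j < x" using x S(1) by auto
            then show ?thesis using S(5) x unfolding k_def by auto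
          qed
        qed
        show "k (dd D) + dd D \<le> rl D (dd D) + 1" using S(6) jd' unfolding k_def by auto
        show "\<forall>ja\<in>insert j E'. \<exists>ia\<in>{i..ja}. (\<forall>x\<in>{ia..<ja}. x \<notin> insert j E') \<and> (ia = i \<or> ia - 1 \<in> insert j E') \<and>
            sum k {ia..ja} = (if ja = dd D then L' else p)"
        proof
          fix ja assume ja: "ja \<in> insert j E'"
          show "\<exists>ia\<in>{i..ja}. (\<forall>x\<in>{ia..<ja}. x \<notin> insert j E') \<and> (ia = i \<or> ia - 1 \<in> insert j E') \<and>
            sum k {ia..ja} = (if ja = dd D then L' else p)"
          proof (cases "ja = j")
            case True
            then show ?thesis using smj ji jd' S(1) by (intro bexI[of _ i]) auto
          next
            case False
            then have jaE: "ja \<in> E'" using ja by simp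
            then obtain ia where ia: "ia \<in> {Suc j..ja}" "\<forall>x\<in>{ia..<ja}. x \<notin> E'" "ia = Suc j \<or> ia - 1 \<in> E'"
                "sum k' {ia..ja} = (if ja = dd D then L' else p)" using S(7) by blast
            have f1: "sum k {ia..ja} = sum k' {ia..ja}" unfolding k_def using ia(1) by (intro sum.cong) auto
            have f2: "\<forall>x\<in>{ia..<ja}. x \<notin> insert j E'" using ia(1,2) by auto
            have f3: "ia - 1 \<in> insert j E'" using ia(3) by auto
            have f4: "ia \<in> {i..ja}" using ia(1) ji by auto
            show ?thesis
            proof (rule bexI[OF _ f4], intro conjI)
              show "\<forall>x\<in>{ia..<ja}. x \<notin> insert j E'" by (rule f2)
              show "ia = i \<or> ia - 1 \<in> insert j E'" using f3 by (rule disjI2)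
              show "sum k {ia..ja} = (if ja = dd D then L' else p)" using f1 ia(4) by simp
            qed
          qed
        qed
        show "1 \<le> L'" using S(8) .
        show "L' \<le> p" using S(9) .
        show "sum k {i..dd D} + p = p * card (insert j E') + L'"
          using sum_split_nat[of i j "dd D" k] ji jd' smj smr S(10) jE finE by simp
      qed
      then show ?thesis using lhs U by metis
    qed
  qed
qed

end

context
  fixes p d :: nat and lam k :: "nat \<Rightarrow> nat" and L :: nat and E :: "nat set"
  assumes S: "SEG p d lam k L E 1"
begin

lemma S_E: "E \<subseteq> {1..d}" "d \<in> E" using S unfolding SEG_def by auto
lemma S_k1: "1 \<le> x \<Longrightarrow> x \<le> d \<Longrightarrow> 1 \<le> k x" using S unfolding SEG_def by auto
lemma S_pass: "1 \<le> x \<Longrightarrow> x \<le> d \<Longrightarrow> x \<notin> E \<Longrightarrow> k x + lam (Suc x) = lam x + 1"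
  using S unfolding SEG_def by auto
lemma S_end: "x \<in> E \<Longrightarrow> x < d \<Longrightarrow> k x + lam (Suc x) \<le> lam x + 1"
  using S unfolding SEG_def by auto
lemma S_d: "k d + d \<le> lam d + 1" using S unfolding SEG_def by auto
lemma S_blk: "j \<in> E \<Longrightarrow> \<exists>i\<in>{1..j}. (\<forall>x\<in>{i..<j}. x \<notin> E) \<and> (i = 1 \<or> i - 1 \<in> E) \<and>
        sum k {i..j} = (if j = d then L else p)"
  using S unfolding SEG_def by auto

lemma S_d1: "1 \<le> d" using S_E by auto

lemma S_step: "1 \<le> x \<Longrightarrow> x < d \<Longrightarrow> k x + lam (Suc x) \<le> lam x + 1"
  using S_pass S_end by (cases "x \<in> E") fastforce+

lemma S_anti: "1 \<le> x \<Longrightarrow> x \<le> y \<Longrightarrow> y \<le> d \<Longrightarrow> lam y \<le> lam x"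
proof (induction y)
  case 0 then show ?case by simp
next
  case (Suc y)
  show ?case
  proof (cases "x = Suc y")
    case True then show ?thesis by simp
  next
    case False
    then have "x \<le> y" "y < d" using Suc.prems by auto
    then have "lam (Suc y) \<le> lam y" using S_step[of y] S_k1[of y] Suc.prems by simp
    then show ?thesis using Suc.IH \<open>x \<le> y\<close> Suc.prems by simp
  qed
qed

lemma S_lamd: "d \<le> lam d" using S_d S_k1[of d] S_d1 by simp

lemma S_kle: "1 \<le> x \<Longrightarrow> x \<le> d \<Longrightarrow> k x \<le> lam x"
proof -
  assume a: "1 \<le> x" "x \<le> d"
  show ?thesis
  proof (cases "x = d")
    case True then show ?thesis using S_d S_d1 by simp
  next
    case False
    then have "1 \<le> lam (Suc x)" using S_anti[of "Suc x" d] S_lamd S_d1 a by simp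
    then show ?thesis using S_step[of x] a False by simp
  qed
qed

lemma S_pass': "1 \<le> x \<Longrightarrow> x < d \<Longrightarrow> x \<notin> E \<Longrightarrow> lam (Suc x) = (lam x - k x) + 1"
  using S_pass[of x] S_kle[of x] by simp

lemma S_end': "1 \<le> x \<Longrightarrow> x < d \<Longrightarrow> x \<in> E \<Longrightarrow> lam (Suc x) \<le> (lam x - k x) + 1"
  using S_end[of x] S_kle[of x] by simp

lemma S_mu_step: "1 \<le> x \<Longrightarrow> x < d \<Longrightarrow> lam (Suc x) - k (Suc x) \<le> lam x - k x"
proof -
  assume a: "1 \<le> x" "x < d"
  have "lam (Suc x) \<le> (lam x - k x) + 1" using S_pass'[OF a] S_end'[OF a] by (cases "x \<in> E") auto
  moreover have "1 \<le> k (Suc x)" using S_k1[of "Suc x"] a by simp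
  ultimately show ?thesis by simp
qed

lemma S_mu_anti: "1 \<le> x \<Longrightarrow> x \<le> y \<Longrightarrow> y \<le> d \<Longrightarrow> lam y - k y \<le> lam x - k x"
proof (induction y)
  case 0 then show ?case by simp
next
  case (Suc y)
  show ?case
  proof (cases "x = Suc y")
    case True then show ?thesis by simp
  next
    case False
    then have "x \<le> y" "y < d" using Suc.prems by auto
    then show ?thesis using S_mu_step[of y] Suc.IH Suc.prems by simp
  qed
qed

lemma S_Q: "1 \<le> i \<Longrightarrow> i \<le> j \<Longrightarrow> j \<le> d \<Longrightarrow> (\<forall>x\<in>{i..<j}. x \<notin> E) \<Longrightarrow>
   lam i + j = (lam j - k j) + i + sum k {i..j}"
proof (induction "j - i" arbitrary: i)
  case 0
  then have "i = j" by simp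
  then show ?case using S_kle[of j] 0 by simp
next
  case (Suc m)
  then have ij: "i < j" by simp
  have IH: "lam (Suc i) + j = (lam j - k j) + Suc i + sum k {Suc i..j}"
    using Suc.hyps(1)[of "Suc i"] Suc.hyps(2) Suc.prems ij by auto
  have "lam (Suc i) = (lam i - k i) + 1" using S_pass'[of i] Suc.prems ij by simp
  moreover have "sum k {i..j} = k i + sum k {Suc i..j}"
    using sum_split_nat[of i i j k] ij by simp
  moreover have "k i \<le> lam i" using S_kle[of i] Suc.prems ij by simp
  ultimately show ?case using IH by simp
qed

end

lemma seg_cmp:
  assumes S1: "SEG p d lam k L E 1" and S2: "SEG p d lam2 k2 L E2 1"
    and mu: "\<And>x. 1 \<le> x \<Longrightarrow> x \<le> d \<Longrightarrow> lam x - k x = lam2 x - k2 x"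
    and h1: "1 \<le> i" "i \<le> j" "j \<le> d" "\<forall>x\<in>{i..<j}. x \<notin> E" "sum k {i..j} = (if j = d then L else p)"
    and h2: "1 \<le> i2" "i2 \<le> j" "\<forall>x\<in>{i2..<j}. x \<notin> E2" "i2 = 1 \<or> i2 - 1 \<in> E2" "sum k2 {i2..j} = (if j = d then L else p)"
  shows "i2 \<le> i"
proof (rule ccontr)
  note A = S_E[OF S1] S_blk[OF S1] S_Q[OF S1] S_mu_anti[OF S1] S_kle[OF S1] S_k1[OF S1] S_end'[OF S1] S_pass'[OF S1]
  note B = S_E[OF S2] S_blk[OF S2] S_Q[OF S2] S_mu_anti[OF S2] S_kle[OF S2] S_k1[OF S2] S_end'[OF S2] S_pass'[OF S2]
  define s where "s = (if j = d then L else p)"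
  assume "\<not> i2 \<le> i"
  then have lt: "i < i2" by simp
  then have i2E: "i2 - 1 \<in> E2" using h2(4) h1(1) by auto
  have q1: "lam i + j = (lam j - k j) + i + s" using A(4)[OF h1(1-4)] h1(5) unfolding s_def by simp
  have q2: "lam2 i2 + j = (lam2 j - k2 j) + i2 + s" using B(4)[OF h2(1,2) h1(3) h2(3)] h2(5) unfolding s_def by simp
  have e2: "lam2 i2 \<le> (lam2 (i2 - 1) - k2 (i2 - 1)) + 1"
    using B(8)[of "i2 - 1"] i2E lt h2(2) h1(1) h1(3) by simp
  have ma: "lam (i2 - 1) - k (i2 - 1) \<le> lam i - k i" using A(5)[of i "i2 - 1"] h1 lt h2 by simp
  have ki: "k i \<le> lam i" "1 \<le> k i" using A(6)[of i] A(7)[of i] h1 by auto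
  have "lam2 (i2 - 1) - k2 (i2 - 1) = lam (i2 - 1) - k (i2 - 1)" using mu[of "i2 - 1"] lt h2 h1 by simp
  moreover have "lam2 j - k2 j = lam j - k j" using mu[of j] h1 by simp
  ultimately show False using q1 q2 e2 ma ki lt by linarith
qed

lemma seg_unique:
  assumes S1: "SEG p d lam k L E 1" and S2: "SEG p d lam2 k2 L E2 1"
    and mu: "\<And>x. 1 \<le> x \<Longrightarrow> x \<le> d \<Longrightarrow> lam x - k x = lam2 x - k2 x"
  shows "1 \<le> x \<Longrightarrow> x \<le> d \<Longrightarrow> lam x = lam2 x"
proof -
  note A = S_E[OF S1] S_blk[OF S1] S_Q[OF S1] S_mu_anti[OF S1] S_kle[OF S1] S_k1[OF S1] S_end'[OF S1] S_pass'[OF S1]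
  note B = S_E[OF S2] S_blk[OF S2] S_Q[OF S2] S_mu_anti[OF S2] S_kle[OF S2] S_k1[OF S2] S_end'[OF S2] S_pass'[OF S2]
  define s where "s j = (if j = d then L else p)" for j
  have blkeq: "\<forall>x<j. x \<in> E \<longleftrightarrow> x \<in> E2" if "j \<in> E" "j \<in> E2" for j
    using that
  proof (induction j rule: less_induct)
    case (less j)
    obtain i where i: "i \<in> {1..j}" "\<forall>x\<in>{i..<j}. x \<notin> E" "i = 1 \<or> i - 1 \<in> E" "sum k {i..j} = s j"
      using A(3)[OF less.prems(1)] unfolding s_def by blast
    obtain i2 where i2: "i2 \<in> {1..j}" "\<forall>x\<in>{i2..<j}. x \<notin> E2" "i2 = 1 \<or> i2 - 1 \<in> E2" "sum k2 {i2..j} = s j"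
      using B(3)[OF less.prems(2)] unfolding s_def by blast
    have jd: "j \<le> d" using A(1) less.prems by auto
    have "i2 \<le> i" using seg_cmp[OF S1 S2 mu, of i j i2] i i2 jd unfolding s_def by auto
    moreover have "i \<le> i2" using seg_cmp[OF S2 S1 mu[symmetric], of i2 j i] i i2 jd unfolding s_def by auto
    ultimately have ii: "i = i2" by simp
    show ?case
    proof (intro allI impI)
      fix x assume xj: "x < j"
      show "x \<in> E \<longleftrightarrow> x \<in> E2"
      proof (cases "i \<le> x")
        case True then show ?thesis using i(2) i2(2) ii xj by auto
      next
        case False
        show ?thesis
        proof (cases "i = 1")
          case True
          then have "x = 0" using False by simp
          then show ?thesis using A(1) B(1) by auto
        next
          case False
          then have in1: "i - 1 \<in> E" "i - 1 \<in> E2" using i(3) i2(3) ii by auto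
          have "i - 1 < j" using i(1) False by auto
          then have IH: "\<forall>y<i - 1. y \<in> E \<longleftrightarrow> y \<in> E2" using less.IH[of "i - 1"] in1 by blast
          show ?thesis
          proof (cases "x = i - 1")
            case True then show ?thesis using in1 by simp
          next
            case False then show ?thesis using IH \<open>\<not> i \<le> x\<close> by simp
          qed
        qed
      qed
    qed
  qed
  have EE: "E = E2"
  proof -
    have "\<forall>x<d. x \<in> E \<longleftrightarrow> x \<in> E2" using blkeq[of d] A(2) B(2) by simp
    note lt = this
    show ?thesis
    proof (rule set_eqI)
      fix x
      show "x \<in> E \<longleftrightarrow> x \<in> E2"
      proof (cases "x < d")
        case True then show ?thesis using lt by blast
      next
        case False
        show ?thesis
        proof (cases "x = d")
          case True then show ?thesis using A(2) B(2) by simp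
        next
          case False
          then have "x \<notin> {1..d}" using \<open>\<not> x < d\<close> by simp
          then show ?thesis using A(1) B(1) by blast
        qed
      qed
    qed
  qed
  assume x1: "1 \<le> x" and xd: "x \<le> d"
  define j where "j = (LEAST j. j \<in> E \<and> x \<le> j)"
  have jE: "j \<in> E" "x \<le> j" using LeastI[of "\<lambda>j. j \<in> E \<and> x \<le> j" d] A(2) xd unfolding j_def by auto
  have jmin: "\<And>j'. j' \<in> E \<Longrightarrow> x \<le> j' \<Longrightarrow> j \<le> j'" unfolding j_def by (simp add: Least_le)
  have jd: "j \<le> d" using A(1) jE by auto
  obtain i where i: "i \<in> {1..j}" "\<forall>y\<in>{i..<j}. y \<notin> E" "i = 1 \<or> i - 1 \<in> E" "sum k {i..j} = s j"
    using A(3)[OF jE(1)] unfolding s_def by blast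
  obtain i2 where i2: "i2 \<in> {1..j}" "\<forall>y\<in>{i2..<j}. y \<notin> E2" "i2 = 1 \<or> i2 - 1 \<in> E2" "sum k2 {i2..j} = s j"
    using B(3)[of j] jE EE unfolding s_def by blast
  have "i2 \<le> i" using seg_cmp[OF S1 S2 mu, of i j i2] i i2 jd unfolding s_def by auto
  moreover have "i \<le> i2" using seg_cmp[OF S2 S1 mu[symmetric], of i2 j i] i i2 jd EE unfolding s_def by auto
  ultimately have ii: "i = i2" by simp
  have ix: "i \<le> x"
  proof (rule ccontr)
    assume "\<not> i \<le> x"
    then have "i - 1 \<in> E" "x \<le> i - 1" using i(3) x1 by auto
    then have "j \<le> i - 1" using jmin by blast
    then show False using i(1) \<open>\<not> i \<le> x\<close> by simp
  qed
  show "lam x = lam2 x"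
  proof (cases "x = i")
    case True
    have q1: "lam i + j = (lam j - k j) + i + s j" using A(4)[of i j] i jd by simp
    have q2: "lam2 i + j = (lam2 j - k2 j) + i + s j" using B(4)[of i j] i2 ii jd by simp
    have "lam2 j - k2 j = lam j - k j" using mu[of j] i jd by simp
    then show ?thesis using q1 q2 True by simp
  next
    case False
    then have xm: "x - 1 \<in> {i..<j}" "1 \<le> x - 1" "x - 1 < d" using ix jE jd i(1) by auto
    have "lam x = (lam (x - 1) - k (x - 1)) + 1" using A(9)[of "x - 1"] xm i(2) by simp
    moreover have "lam2 x = (lam2 (x - 1) - k2 (x - 1)) + 1" using B(9)[of "x - 1"] xm i2(2) ii by simp
    moreover have "lam2 (x - 1) - k2 (x - 1) = lam (x - 1) - k (x - 1)" using mu[of "x - 1"] xm by simp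
    ultimately show ?thesis by simp
  qed
qed

definition Hk :: "nat \<Rightarrow> (nat \<Rightarrow> nat) \<Rightarrow> (nat\<times>nat) set" where
 "Hk d g = {(a,b). 1 \<le> a \<and> 1 \<le> b \<and> ((a \<le> b \<and> a \<le> d \<and> b \<le> g a) \<or> (b < a \<and> b \<le> d \<and> a \<le> g b))}"

lemma hk_mem: "(a,b) \<in> Hk d g \<longleftrightarrow> 1 \<le> a \<and> 1 \<le> b \<and> ((a \<le> b \<and> a \<le> d \<and> b \<le> g a) \<or> (b < a \<and> b \<le> d \<and> a \<le> g b))"
  unfolding Hk_def by simp

lemma hk_sym: "symd (Hk d g)"
  unfolding symd_def hk_mem by auto

lemma hk_cong: "(\<And>x. 1 \<le> x \<Longrightarrow> x \<le> d \<Longrightarrow> g x = h x) \<Longrightarrow> Hk d g = Hk d h"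
  unfolding Hk_def by auto

lemma hk_diag: "(a,a) \<in> Hk d g \<longleftrightarrow> 1 \<le> a \<and> a \<le> d \<and> a \<le> g a"
  unfolding hk_mem by auto

lemma hk_upper: "1 \<le> x \<Longrightarrow> x \<le> d \<Longrightarrow> {y. x \<le> y \<and> (x,y) \<in> Hk d g} = {x..g x}"
  unfolding hk_mem by auto

lemma hk_down:
  assumes anti: "\<And>x y. 1 \<le> x \<Longrightarrow> x \<le> y \<Longrightarrow> y \<le> d \<Longrightarrow> g y \<le> g x"
  shows "downset (Hk d g)"
proof -
  define M where "M = d + (\<Sum>x\<in>{1..d}. g x)"
  have gM: "g x \<le> M" if "1 \<le> x" "x \<le> d" for x
  proof -
    have "g x \<le> (\<Sum>x\<in>{1..d}. g x)" using that by (intro member_le_sum) auto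
    then show ?thesis unfolding M_def by simp
  qed
  have sub: "Hk d g \<subseteq> {1..M} \<times> {1..M}"
  proof
    fix z assume "z \<in> Hk d g"
    then obtain a b where z: "z = (a,b)" and ab: "(a,b) \<in> Hk d g" by (cases z) auto
    then have h: "1 \<le> a \<and> 1 \<le> b \<and> ((a \<le> b \<and> a \<le> d \<and> b \<le> g a) \<or> (b < a \<and> b \<le> d \<and> a \<le> g b))"
      using hk_mem by blast
    show "z \<in> {1..M} \<times> {1..M}"
    proof (cases "a \<le> b")
      case True
      then have "b \<le> g a" "a \<le> d" using h by auto
      then show ?thesis using gM[of a] h True z by auto
    next
      case False
      then have "a \<le> g b" "b \<le> d" using h by auto
      then show ?thesis using gM[of b] h False z by auto
    qed
  qed
  have fin: "finite (Hk d g)" using sub finite_subset by blast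
  have pos: "\<forall>i j. (i,j) \<in> Hk d g \<longrightarrow> 1 \<le> i \<and> 1 \<le> j" using hk_mem by blast
  have dc: "(i', j') \<in> Hk d g" if a: "(i, j) \<in> Hk d g \<and> 1 \<le> i' \<and> i' \<le> i \<and> 1 \<le> j' \<and> j' \<le> j" for i j i' j'
  proof -
    have h: "1 \<le> i \<and> 1 \<le> j \<and> ((i \<le> j \<and> i \<le> d \<and> j \<le> g i) \<or> (j < i \<and> j \<le> d \<and> i \<le> g j))"
      using a hk_mem by blast
    show "(i', j') \<in> Hk d g"
      unfolding hk_mem
    proof (cases "i \<le> j")
      case True
      then have t: "i \<le> d" "j \<le> g i" using h by auto
      show "1 \<le> i' \<and> 1 \<le> j' \<and> (i' \<le> j' \<and> i' \<le> d \<and> j' \<le> g i' \<or> j' < i' \<and> j' \<le> d \<and> i' \<le> g j')"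
      proof (cases "i' \<le> j'")
        case True
        have "g i \<le> g i'" using anti[of i' i] a t by simp
        then show ?thesis using True a t by simp
      next
        case False
        have "g i \<le> g j'" using anti[of j' i] a t False by simp
        then show ?thesis using False a t \<open>i \<le> j\<close> by simp
      qed
    next
      case False
      then have t: "j \<le> d" "i \<le> g j" using h by auto
      show "1 \<le> i' \<and> 1 \<le> j' \<and> (i' \<le> j' \<and> i' \<le> d \<and> j' \<le> g i' \<or> j' < i' \<and> j' \<le> d \<and> i' \<le> g j')"
      proof (cases "i' \<le> j'")
        case True
        have "g j \<le> g i'" using anti[of i' j] a t True by simp
        then show ?thesis using True a t False by simp
      next
        case False
        have "g j \<le> g j'" using anti[of j' j] a t by simp
        then show ?thesis using False a t by simp
      qed
    qed
  qed
  show ?thesis unfolding downset_def using fin pos dc by blast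
qed

context sdown
begin

lemma D_hk: "D = Hk (dd D) (rl D)"
proof (rule set_eqI)
  fix z :: "nat \<times> nat"
  obtain a b where z: "z = (a,b)" by (cases z)
  have "(a,b) \<in> D \<longleftrightarrow> (a,b) \<in> Hk (dd D) (rl D)"
  proof (cases "a \<le> b")
    case True
    have "(a,b) \<in> D \<longleftrightarrow> 1 \<le> a \<and> 1 \<le> b \<and> a \<le> dd D \<and> b \<le> rl D a"
    proof
      assume ab: "(a,b) \<in> D"
      then have p: "1 \<le> a" "1 \<le> b" using downset_pos[OF ds] by auto
      then have "(a,a) \<in> D" using downset_dc[OF ds ab, of a a] True by simp
      then have "a \<le> dd D" using diag_iff[OF ds] by simp
      moreover have "b \<le> rl D a" using ab downset_mem[OF ds] by simp
      ultimately show "1 \<le> a \<and> 1 \<le> b \<and> a \<le> dd D \<and> b \<le> rl D a" using p by simp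
    next
      assume "1 \<le> a \<and> 1 \<le> b \<and> a \<le> dd D \<and> b \<le> rl D a"
      then show "(a,b) \<in> D" using downset_mem[OF ds] by simp
    qed
    then show ?thesis using True unfolding hk_mem by auto
  next
    case False
    have "(a,b) \<in> D \<longleftrightarrow> (b,a) \<in> D" using symd_iff[OF sy] by simp
    also have "\<dots> \<longleftrightarrow> 1 \<le> a \<and> 1 \<le> b \<and> b \<le> dd D \<and> a \<le> rl D b"
    proof
      assume ab: "(b,a) \<in> D"
      then have p: "1 \<le> a" "1 \<le> b" using downset_pos[OF ds] by auto
      then have "(b,b) \<in> D" using downset_dc[OF ds ab, of b b] False by simp
      then have "b \<le> dd D" using diag_iff[OF ds] by simp
      moreover have "a \<le> rl D b" using ab downset_mem[OF ds] by simp
      ultimately show "1 \<le> a \<and> 1 \<le> b \<and> b \<le> dd D \<and> a \<le> rl D b" using p by simp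
    next
      assume "1 \<le> a \<and> 1 \<le> b \<and> b \<le> dd D \<and> a \<le> rl D b"
      then show "(b,a) \<in> D" using downset_mem[OF ds] by simp
    qed
    finally show ?thesis using False unfolding hk_mem by auto
  qed
  then show "z \<in> D \<longleftrightarrow> z \<in> Hk (dd D) (rl D)" using z by simp
qed

lemma U_char:
  assumes p1: "1 \<le> p"
  shows "\<exists>k E L. SEG p (dd D) (rl D) k L E 1 \<and>
     U_set p D = {(x,y). 1 \<le> x \<and> x \<le> dd D \<and> rl D x - k x < y \<and> y \<le> rl D x}"
proof -
  have "dd D - 1 < nrows D" using dn d1 by simp
  then obtain k E L where
    H1: "pseg_idx (nrows D) p (rim_list D) (nrows D) (Sx D 1) \<inter> {..<mm D} = (\<Union>x\<in>{1..dd D}. {Sx D x..<Sx D x + k x})"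
    and H2: "SEG p (dd D) (rl D) k L E 1"
    using seg_exists[OF p1, of 1 "nrows D"] d1 by auto
  define P where "P = pseg_idx (nrows D) p (rim_list D) (nrows D) 0"
  have n1: "1 \<le> nrows D" using dn d1 by simp
  have Psub: "P \<subseteq> {0..<length (rim_list D)}"
    using pseg_sub[OF ds p1 order.refl n1, of "nrows D"] unfolding P_def Sx_1 by simp
  have prim: "p_rim p D = (\<lambda>k. rim_list D ! k) ` P" unfolding p_rim_def P_def by (simp add: Let_def)
  have U1: "U_set p D = (\<lambda>k. rim_list D ! k) ` (P \<inter> {..<mm D})"
  proof -
    have "U_set p D = {z \<in> (\<lambda>k. rim_list D ! k) ` P. fst z \<le> snd z}"
    proof (rule set_eqI)
      fix z :: "nat \<times> nat"
      show "z \<in> U_set p D \<longleftrightarrow> z \<in> {z \<in> (\<lambda>k. rim_list D ! k) ` P. fst z \<le> snd z}"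
        by (cases z) (simp add: U_set_def prim)
    qed
    also have "\<dots> = (\<lambda>k. rim_list D ! k) ` (P \<inter> {..<mm D})"
    proof
      show "{z \<in> (\<lambda>k. rim_list D ! k) ` P. fst z \<le> snd z} \<subseteq> (\<lambda>k. rim_list D ! k) ` (P \<inter> {..<mm D})"
      proof
        fix z assume "z \<in> {z \<in> (\<lambda>k. rim_list D ! k) ` P. fst z \<le> snd z}"
        then obtain q where q: "q \<in> P" "z = rim_list D ! q" "fst z \<le> snd z" by auto
        then have "q < mm D" using upper_iff[of q] Psub by auto
        then show "z \<in> (\<lambda>k. rim_list D ! k) ` (P \<inter> {..<mm D})" using q by auto
      qed
      show "(\<lambda>k. rim_list D ! k) ` (P \<inter> {..<mm D}) \<subseteq> {z \<in> (\<lambda>k. rim_list D ! k) ` P. fst z \<le> snd z}"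
      proof
        fix z assume "z \<in> (\<lambda>k. rim_list D ! k) ` (P \<inter> {..<mm D})"
        then obtain q where q: "q \<in> P" "q < mm D" "z = rim_list D ! q" by auto
        then have "fst z \<le> snd z" using upper_iff[of q] Psub by auto
        then show "z \<in> {z \<in> (\<lambda>k. rim_list D ! k) ` P. fst z \<le> snd z}" using q by auto
      qed
    qed
    finally show ?thesis .
  qed
  have kul: "k x \<le> ul D x" if "1 \<le> x" "x \<le> dd D" for x
  proof (cases "x = dd D")
    case True then show ?thesis using S_d[OF H2] ul_d by simp
  next
    case False
    then have "x < dd D" using that by simp
    then show ?thesis using S_step[OF H2, of x] lenr_up[of x] that unfolding ul_def by simp
  qed
  have klam: "k x \<le> rl D x" if "1 \<le> x" "x \<le> dd D" for x using S_kle[OF H2] that by simp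
  have nth: "rim_list D ! (Sx D x + c) = (x, rl D x - c)" if "1 \<le> x" "x \<le> dd D" "c < k x" for x c
    using rim_list_nth[OF ds, of x c] kul[OF that(1,2)] ul_lenr[OF that(1,2)] that dn by simp
  have U2: "(\<lambda>k. rim_list D ! k) ` (\<Union>x\<in>{1..dd D}. {Sx D x..<Sx D x + k x}) =
      {(x,y). 1 \<le> x \<and> x \<le> dd D \<and> rl D x - k x < y \<and> y \<le> rl D x}"
  proof
    show "(\<lambda>k. rim_list D ! k) ` (\<Union>x\<in>{1..dd D}. {Sx D x..<Sx D x + k x}) \<subseteq>
      {(x,y). 1 \<le> x \<and> x \<le> dd D \<and> rl D x - k x < y \<and> y \<le> rl D x}"
    proof
      fix z assume "z \<in> (\<lambda>k. rim_list D ! k) ` (\<Union>x\<in>{1..dd D}. {Sx D x..<Sx D x + k x})"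
      then obtain x q where xq: "1 \<le> x" "x \<le> dd D" "Sx D x \<le> q" "q < Sx D x + k x" "z = rim_list D ! q" by auto
      define c where "c = q - Sx D x"
      have c: "c < k x" "q = Sx D x + c" using xq unfolding c_def by auto
      have "z = (x, rl D x - c)" using nth[OF xq(1,2) c(1)] xq(5) c(2) by simp
      then show "z \<in> {(x,y). 1 \<le> x \<and> x \<le> dd D \<and> rl D x - k x < y \<and> y \<le> rl D x}"
        using xq(1,2) c(1) klam[OF xq(1,2)] by auto
    qed
    show "{(x,y). 1 \<le> x \<and> x \<le> dd D \<and> rl D x - k x < y \<and> y \<le> rl D x} \<subseteq>
      (\<lambda>k. rim_list D ! k) ` (\<Union>x\<in>{1..dd D}. {Sx D x..<Sx D x + k x})"
    proof
      fix z assume "z \<in> {(x,y). 1 \<le> x \<and> x \<le> dd D \<and> rl D x - k x < y \<and> y \<le> rl D x}"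
      then obtain x y where xy: "z = (x,y)" "1 \<le> x" "x \<le> dd D" "rl D x - k x < y" "y \<le> rl D x" by auto
      define c where "c = rl D x - y"
      have c: "c < k x" "y = rl D x - c" using xy klam[OF xy(2,3)] unfolding c_def by auto
      have "rim_list D ! (Sx D x + c) = z" using nth[OF xy(2,3) c(1)] xy(1) c(2) by simp
      moreover have "Sx D x + c \<in> (\<Union>x\<in>{1..dd D}. {Sx D x..<Sx D x + k x})"
        using xy(2,3) c(1) by (intro UN_I[of x]) auto
      ultimately show "z \<in> (\<lambda>k. rim_list D ! k) ` (\<Union>x\<in>{1..dd D}. {Sx D x..<Sx D x + k x})" by force
    qed
  qed
  have "U_set p D = {(x,y). 1 \<le> x \<and> x \<le> dd D \<and> rl D x - k x < y \<and> y \<le> rl D x}"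
    using U1 U2 H1 unfolding P_def Sx_1 by simp
  then show ?thesis using H2 by blast
qed

end

context sdown
begin

context
  fixes p :: nat and k :: "nat \<Rightarrow> nat" and E L
  assumes p1: "1 \<le> p" and H: "SEG p (dd D) (rl D) k L E 1"
    and HU: "U_set p D = {(x,y). 1 \<le> x \<and> x \<le> dd D \<and> rl D x - k x < y \<and> y \<le> rl D x}"
begin

definition mu where "mu x = rl D x - k x"

lemma mu_ge1: "1 \<le> x \<Longrightarrow> x \<le> dd D \<Longrightarrow> x \<le> mu x + 1"
proof -
  assume a: "1 \<le> x" "x \<le> dd D"
  have "mu (dd D) + 1 \<ge> dd D" using S_d[OF H] unfolding mu_def by simp
  moreover have "mu (dd D) \<le> mu x" using S_mu_anti[OF H a] d1 unfolding mu_def by simp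
  ultimately show ?thesis using a by simp
qed

lemma mu_ge2: "1 \<le> x \<Longrightarrow> x < dd D \<Longrightarrow> x \<le> mu x"
proof -
  assume a: "1 \<le> x" "x < dd D"
  have "k x + rl D (Suc x) \<le> rl D x + 1" using S_step[OF H a] .
  moreover have "dd D \<le> rl D (Suc x)" using lenr_up(3)[OF a] .
  moreover have "k x \<le> rl D x" using S_kle[OF H, of x] a by simp
  ultimately show ?thesis using a unfolding mu_def by simp
qed

lemma mu_le: "1 \<le> x \<Longrightarrow> x \<le> dd D \<Longrightarrow> mu x \<le> rl D x"
  unfolding mu_def by simp

lemma U_mem: "(a,b) \<in> U_set p D \<longleftrightarrow> 1 \<le> a \<and> a \<le> dd D \<and> mu a < b \<and> b \<le> rl D a"
  unfolding HU mu_def by simp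

lemma Dp: "D - rim_star p D = Hk (dd D) mu"
proof (rule set_eqI)
  fix z :: "nat \<times> nat"
  obtain a b where z: "z = (a,b)" by (cases z)
  have rs: "(a,b) \<in> rim_star p D \<longleftrightarrow> (a,b) \<in> U_set p D \<or> (b,a) \<in> U_set p D"
    unfolding rim_star_def by auto
  have Dm: "(a,b) \<in> D \<longleftrightarrow> (a,b) \<in> Hk (dd D) (rl D)" using D_hk by simp
  have "(a,b) \<in> D - rim_star p D \<longleftrightarrow> (a,b) \<in> Hk (dd D) mu"
  proof (cases "a \<le> b")
    case True
    show ?thesis
    proof
      assume h: "(a,b) \<in> D - rim_star p D"
      then have h1: "1 \<le> a" "1 \<le> b" "a \<le> dd D" "b \<le> rl D a" using Dm True unfolding hk_mem by auto
      have "(a,b) \<notin> U_set p D" using h rs by auto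
      then have "b \<le> mu a" using U_mem h1 by auto
      then show "(a,b) \<in> Hk (dd D) mu" using h1 True unfolding hk_mem by auto
    next
      assume h: "(a,b) \<in> Hk (dd D) mu"
      then have h1: "1 \<le> a" "1 \<le> b" "a \<le> dd D" "b \<le> mu a" using True unfolding hk_mem by auto
      have "b \<le> rl D a" using h1 mu_le[of a] by simp
      then have inD: "(a,b) \<in> D" using Dm h1 True unfolding hk_mem by auto
      have n1: "(a,b) \<notin> U_set p D" using U_mem h1 by auto
      have n2: "(b,a) \<notin> U_set p D"
      proof
        assume "(b,a) \<in> U_set p D"
        then have b1: "b \<le> dd D" "mu b < a" using U_mem by auto
        show False
        proof (cases "a = b")
          case True then show False using b1 h1 by simp
        next
          case False
          then have "b \<le> mu b + 1" using mu_ge1[of b] b1 h1 by simp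
          then show False using b1 False True by simp
        qed
      qed
      show "(a,b) \<in> D - rim_star p D" using inD n1 n2 rs by auto
    qed
  next
    case False
    show ?thesis
    proof
      assume h: "(a,b) \<in> D - rim_star p D"
      then have h1: "1 \<le> a" "1 \<le> b" "b \<le> dd D" "a \<le> rl D b" using Dm False unfolding hk_mem by auto
      have "(b,a) \<notin> U_set p D" using h rs by auto
      then have "a \<le> mu b" using U_mem h1 by auto
      then show "(a,b) \<in> Hk (dd D) mu" using h1 False unfolding hk_mem by auto
    next
      assume h: "(a,b) \<in> Hk (dd D) mu"
      then have h1: "1 \<le> a" "1 \<le> b" "b \<le> dd D" "a \<le> mu b" using False unfolding hk_mem by auto
      have "a \<le> rl D b" using h1 mu_le[of b] by simp
      then have inD: "(a,b) \<in> D" using Dm h1 False unfolding hk_mem by auto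
      have n2: "(b,a) \<notin> U_set p D" using U_mem h1 by auto
      have n1: "(a,b) \<notin> U_set p D"
      proof
        assume "(a,b) \<in> U_set p D"
        then have b1: "a \<le> dd D" "mu a < b" using U_mem by auto
        then have "a \<le> mu a + 1" using mu_ge1[of a] h1 by simp
        then show False using b1 False by simp
      qed
      show "(a,b) \<in> D - rim_star p D" using inD n1 n2 rs by auto
    qed
  qed
  then show "z \<in> D - rim_star p D \<longleftrightarrow> z \<in> Hk (dd D) mu" using z by simp
qed

lemma Dp_down: "downset (Hk (dd D) mu)"
  by (rule hk_down) (use S_mu_anti[OF H] in \<open>auto simp: mu_def\<close>)

definition eps where "eps = (if mu (dd D) < dd D then 1 else (0::nat))"

lemma dd_Dp: "dd (Hk (dd D) mu) + eps = dd D"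
proof -
  have "{a. (a,a) \<in> Hk (dd D) mu} = {a. 1 \<le> a \<and> a \<le> dd D \<and> a \<le> mu a}" using hk_diag by blast
  also have "\<dots> = {1..dd D - eps}"
  proof (cases "mu (dd D) < dd D")
    case True
    show ?thesis
    proof (rule set_eqI)
      fix a
      show "a \<in> {a. 1 \<le> a \<and> a \<le> dd D \<and> a \<le> mu a} \<longleftrightarrow> a \<in> {1..dd D - eps}"
      proof (cases "a < dd D")
        case True then show ?thesis using mu_ge2[of a] \<open>mu (dd D) < dd D\<close> unfolding eps_def by auto
      next
        case False then show ?thesis using \<open>mu (dd D) < dd D\<close> unfolding eps_def by auto
      qed
    qed
  next
    case False
    show ?thesis
    proof (rule set_eqI)
      fix a
      show "a \<in> {a. 1 \<le> a \<and> a \<le> dd D \<and> a \<le> mu a} \<longleftrightarrow> a \<in> {1..dd D - eps}"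
      proof (cases "a < dd D")
        case True then show ?thesis using mu_ge2[of a] False unfolding eps_def by auto
      next
        case False then show ?thesis using \<open>\<not> mu (dd D) < dd D\<close> unfolding eps_def by auto
      qed
    qed
  qed
  finally have "dd (Hk (dd D) mu) = dd D - eps" unfolding dd_def by simp
  moreover have "eps \<le> dd D" unfolding eps_def using d1 by simp
  ultimately show ?thesis by simp
qed

lemma upper_Dp: "1 \<le> x \<Longrightarrow> x \<le> dd D \<Longrightarrow> card {y. x \<le> y \<and> (x,y) \<in> Hk (dd D) mu} + x = mu x + 1"
  using hk_upper[of x "dd D" mu] mu_ge1[of x] by simp

lemma card_U: "card (U_set p D) = sum k {1..dd D}"
proof -
  have "U_set p D = (SIGMA x:{1..dd D}. {mu x<..rl D x})" unfolding HU mu_def by auto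
  then have "card (U_set p D) = (\<Sum>x\<in>{1..dd D}. card {mu x<..rl D x})" by simp
  also have "\<dots> = sum k {1..dd D}"
    by (rule sum.cong) (use S_kle[OF H] in \<open>auto simp: mu_def\<close>)
  finally show ?thesis .
qed

lemma finU: "finite (U_set p D)"
proof -
  have "U_set p D = (SIGMA x:{1..dd D}. {mu x<..rl D x})" unfolding HU mu_def by auto
  then show ?thesis by simp
qed

lemma card_rs: "card (rim_star p D) + eps = 2 * card (U_set p D)"
proof -
  define U where "U = U_set p D"
  define V where "V = {(j,i). (i,j) \<in> U}"
  have rs: "rim_star p D = U \<union> V" unfolding rim_star_def U_def V_def by simp
  have V: "V = (\<lambda>(i,j). (j,i)) ` U" unfolding V_def by auto
  have cV: "card V = card U" unfolding V by (rule card_image) (auto simp: inj_on_def)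
  have fU: "finite U" using finU unfolding U_def .
  have fV: "finite V" unfolding V using fU by simp
  have int: "U \<inter> V = (if mu (dd D) < dd D then {(dd D, dd D)} else {})"
  proof (rule set_eqI)
    fix z :: "nat \<times> nat"
    obtain a b where z: "z = (a,b)" by (cases z)
    have "(a,b) \<in> U \<inter> V \<longleftrightarrow> (a,b) \<in> (if mu (dd D) < dd D then {(dd D, dd D)} else {})"
    proof
      assume h: "(a,b) \<in> U \<inter> V"
      then have u1: "1 \<le> a" "a \<le> dd D" "mu a < b" "b \<le> rl D a" using U_mem unfolding U_def by auto
      have u2: "1 \<le> b" "b \<le> dd D" "mu b < a" "a \<le> rl D b" using h U_mem unfolding U_def V_def by auto
      have "a \<le> mu a + 1" "b \<le> mu b + 1" using mu_ge1 u1 u2 by auto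
      then have ab: "a = b" using u1 u2 by simp
      have "a = dd D"
      proof (rule ccontr)
        assume "a \<noteq> dd D"
        then have "a \<le> mu a" using mu_ge2[of a] u1 by simp
        then show False using u1 ab by simp
      qed
      then show "(a,b) \<in> (if mu (dd D) < dd D then {(dd D, dd D)} else {})" using ab u1 by simp
    next
      assume h: "(a,b) \<in> (if mu (dd D) < dd D then {(dd D, dd D)} else {})"
      then have "a = dd D" "b = dd D" "mu (dd D) < dd D" by (auto split: if_splits)
      moreover have "dd D \<le> rl D (dd D)" using rl_ge d1 by simp
      ultimately show "(a,b) \<in> U \<inter> V" using U_mem d1 unfolding U_def V_def by auto
    qed
    then show "z \<in> U \<inter> V \<longleftrightarrow> z \<in> (if mu (dd D) < dd D then {(dd D, dd D)} else {})" using z by simp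
  qed
  have "card U + card V = card (U \<union> V) + card (U \<inter> V)" using card_Un_Int[OF fU fV] .
  moreover have "card (U \<inter> V) = eps" unfolding int eps_def by simp
  ultimately show ?thesis using rs cV unfolding U_def by simp
qed

lemma U_ne: "U_set p D \<noteq> {}"
proof -
  have "1 \<le> k 1" using S_k1[OF H, of 1] d1 by simp
  moreover have "k 1 \<le> rl D 1" using S_kle[OF H, of 1] d1 by simp
  ultimately have "(1, rl D 1) \<in> U_set p D" using U_mem d1 unfolding mu_def by simp
  then show ?thesis by auto
qed

lemma rs_sub: "rim_star p D \<subseteq> D"
proof -
  have "U_set p D \<subseteq> D"
  proof
    fix z :: "nat \<times> nat"
    obtain a b where z: "z = (a,b)" by (cases z)
    assume "z \<in> U_set p D"
    then have "1 \<le> a" "1 \<le> b" "b \<le> rl D a" using U_mem z by auto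
    then show "z \<in> D" using downset_mem[OF ds, of a b] z by simp
  qed
  then show ?thesis unfolding rim_star_def using symd_iff[OF sy] by auto
qed

end

end

lemma L_det:
  fixes r p c L :: nat
  assumes "r + p = p * c + L" "1 \<le> L" "L \<le> p"
  shows "L = (r + p - 1) mod p + 1"
proof -
  have "r + p - 1 = (L - 1) + p * c" using assms by simp
  then have "(r + p - 1) mod p = (L - 1) mod p" by simp
  also have "\<dots> = L - 1" using assms by simp
  finally show ?thesis using assms by simp
qed

lemma one_step:
  assumes A: "sdown D" and B: "sdown D2" and p1: "1 \<le> p"
    and c1: "card (rim_star p D) = card (rim_star p D2)"
    and c2: "card (U_set p D) = card (U_set p D2)"
    and eq: "D - rim_star p D = D2 - rim_star p D2"
  shows "D = D2"
proof -
  obtain k E L where HA: "SEG p (dd D) (rl D) k L E 1"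
    and UA: "U_set p D = {(x,y). 1 \<le> x \<and> x \<le> dd D \<and> rl D x - k x < y \<and> y \<le> rl D x}"
    using sdown.U_char[OF A p1] by blast
  obtain k2 E2 L2 where HB: "SEG p (dd D2) (rl D2) k2 L2 E2 1"
    and UB: "U_set p D2 = {(x,y). 1 \<le> x \<and> x \<le> dd D2 \<and> rl D2 x - k2 x < y \<and> y \<le> rl D2 x}"
    using sdown.U_char[OF B p1] by blast
  define muA where "muA = sdown.mu D k"
  define muB where "muB = sdown.mu D2 k2"
  have DpA: "D - rim_star p D = Hk (dd D) muA" using sdown.Dp[OF A p1 HA UA] unfolding muA_def .
  have DpB: "D2 - rim_star p D2 = Hk (dd D2) muB" using sdown.Dp[OF B p1 HB UB] unfolding muB_def .
  have eA: "card (rim_star p D) + sdown.eps D k = 2 * card (U_set p D)" using sdown.card_rs[OF A p1 HA UA] .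
  have eB: "card (rim_star p D2) + sdown.eps D2 k2 = 2 * card (U_set p D2)" using sdown.card_rs[OF B p1 HB UB] .
  have ee: "sdown.eps D k = sdown.eps D2 k2" using eA eB c1 c2 by simp
  have dA: "dd (Hk (dd D) muA) + sdown.eps D k = dd D" using sdown.dd_Dp[OF A p1 HA UA] unfolding muA_def .
  have dB: "dd (Hk (dd D2) muB) + sdown.eps D2 k2 = dd D2" using sdown.dd_Dp[OF B p1 HB UB] unfolding muB_def .
  have HH: "Hk (dd D) muA = Hk (dd D2) muB" using DpA DpB eq by simp
  have ddeq: "dd D = dd D2" using dA dB ee HH by simp
  have mueq: "muA x = muB x" if "1 \<le> x" "x \<le> dd D" for x
  proof -
    have "card {y. x \<le> y \<and> (x,y) \<in> Hk (dd D) muA} + x = muA x + 1"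
      using sdown.upper_Dp[OF A p1 HA UA that] unfolding muA_def .
    moreover have "card {y. x \<le> y \<and> (x,y) \<in> Hk (dd D2) muB} + x = muB x + 1"
      using sdown.upper_Dp[OF B p1 HB UB] that ddeq unfolding muB_def by simp
    ultimately show ?thesis using HH by simp
  qed
  have sA: "sum k {1..dd D} + p = p * card E + L" "1 \<le> L" "L \<le> p" using HA unfolding SEG_def by auto
  have sB: "sum k2 {1..dd D2} + p = p * card E2 + L2" "1 \<le> L2" "L2 \<le> p" using HB unfolding SEG_def by auto
  have rA: "card (U_set p D) = sum k {1..dd D}" using sdown.card_U[OF A p1 HA UA] .
  have rB: "card (U_set p D2) = sum k2 {1..dd D2}" using sdown.card_U[OF B p1 HB UB] .
  have LL: "L = L2" using L_det[OF sA] L_det[OF sB] rA rB c2 by simp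
  have HB': "SEG p (dd D) (rl D2) k2 L E2 1" using HB ddeq LL by simp
  have rleq: "rl D x = rl D2 x" if "1 \<le> x" "x \<le> dd D" for x
  proof (rule seg_unique[OF HA HB' _ that])
    fix y assume "1 \<le> y" "y \<le> dd D"
    then show "rl D y - k y = rl D2 y - k2 y"
      using mueq[of y] sdown.mu_def[OF A p1 HA UA, of y] sdown.mu_def[OF B p1 HB UB, of y]
      unfolding muA_def muB_def by simp
  qed
  have "D = Hk (dd D) (rl D)" using sdown.D_hk[OF A] .
  also have "\<dots> = Hk (dd D) (rl D2)" using rleq by (rule hk_cong)
  also have "\<dots> = D2" using sdown.D_hk[OF B] ddeq by simp
  finally show ?thesis .
qed

lemma bg_nonempty:
  assumes "D \<noteq> {}" "1 \<le> f" shows "bg_aux f p D \<noteq> []"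
proof -
  obtain f' where "f = Suc f'" using assms(2) by (cases f) auto
  then show ?thesis using assms(1) by simp
qed

lemma next_props:
  assumes A: "sdown D" and p1: "1 \<le> p"
  shows "downset (D - rim_star p D)" "symd (D - rim_star p D)" "card (D - rim_star p D) < card D"
proof -
  obtain k E L where HA: "SEG p (dd D) (rl D) k L E 1"
    and UA: "U_set p D = {(x,y). 1 \<le> x \<and> x \<le> dd D \<and> rl D x - k x < y \<and> y \<le> rl D x}"
    using sdown.U_char[OF A p1] by blast
  show "downset (D - rim_star p D)" using sdown.Dp[OF A p1 HA UA] sdown.Dp_down[OF A p1 HA UA] by simp
  show "symd (D - rim_star p D)" using sdown.Dp[OF A p1 HA UA] hk_sym by simp
  have fin: "finite D" using downset_fin sdown.ds[OF A] by blast
  have sub: "rim_star p D \<subseteq> D" using sdown.rs_sub[OF A p1 HA UA] .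
  have "U_set p D \<noteq> {}" using sdown.U_ne[OF A p1 HA UA] .
  then have ne: "rim_star p D \<noteq> {}" unfolding rim_star_def by auto
  show "card (D - rim_star p D) < card D"
  proof (rule psubset_card_mono[OF fin])
    show "D - rim_star p D \<subset> D" using sub ne by blast
  qed
qed

lemma bg_inj:
  assumes p1: "1 \<le> p"
  shows "\<forall>D D2 f2. downset D \<longrightarrow> symd D \<longrightarrow> downset D2 \<longrightarrow> symd D2 \<longrightarrow> card D \<le> f \<longrightarrow> card D2 \<le> f2 \<longrightarrow>
     bg_aux f p D = bg_aux f2 p D2 \<longrightarrow> D = D2"
proof (induction f)
  case 0
  show ?case
  proof (intro allI impI)
    fix D D2 :: "(nat\<times>nat) set" and f2 :: nat
    assume h: "downset D" "symd D" "downset D2" "symd D2" "card D \<le> 0" "card D2 \<le> f2" "bg_aux 0 p D = bg_aux f2 p D2"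
    have "finite D" by (rule downset_fin[OF h(1)])
    then have "D = {}" using h(5) by simp
    moreover have "D2 = {}"
    proof (rule ccontr)
      assume "D2 \<noteq> {}"
      moreover have "finite D2" by (rule downset_fin[OF h(3)])
      ultimately have "1 \<le> card D2" by (simp add: Suc_le_eq card_gt_0_iff)
      then have "bg_aux f2 p D2 \<noteq> []" using bg_nonempty[OF \<open>D2 \<noteq> {}\<close>] h(6) by simp
      then show False using h(7) by simp
    qed
    ultimately show "D = D2" by simp
  qed
next
  case (Suc f)
  show ?case
  proof (intro allI impI)
    fix D D2 :: "(nat\<times>nat) set" and f2 :: nat
    assume h: "downset D" "symd D" "downset D2" "symd D2" "card D \<le> Suc f" "card D2 \<le> f2"
      "bg_aux (Suc f) p D = bg_aux f2 p D2"
    show "D = D2"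
    proof (cases "D = {}")
      case True
      show ?thesis
      proof (rule ccontr)
        assume "D \<noteq> D2"
        then have "D2 \<noteq> {}" using True by simp
        moreover have "finite D2" by (rule downset_fin[OF h(3)])
      ultimately have "1 \<le> card D2" by (simp add: Suc_le_eq card_gt_0_iff)
        then have "bg_aux f2 p D2 \<noteq> []" using bg_nonempty[OF \<open>D2 \<noteq> {}\<close>] h(6) by simp
        then show False using h(7) True by simp
      qed
    next
      case False
      have D2ne: "D2 \<noteq> {}"
      proof
        assume "D2 = {}"
        then have "bg_aux f2 p D2 = []" by (cases f2) auto
        then show False using h(7) False by simp
      qed
      have "finite D2" by (rule downset_fin[OF h(3)])
      then have "1 \<le> card D2" using D2ne by (simp add: Suc_le_eq card_gt_0_iff)
      then obtain f2' where f2: "f2 = Suc f2'" using h(6) by (cases f2) auto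
      have A: "sdown D" using h(1,2) False by (simp add: sdown_def)
      have B: "sdown D2" using h(3,4) D2ne by (simp add: sdown_def)
      have u1: "bg_aux (Suc f) p D = (card (rim_star p D), card (U_set p D)) # bg_aux f p (D - rim_star p D)"
        using False by simp
      have u2: "bg_aux f2 p D2 = (card (rim_star p D2), card (U_set p D2)) # bg_aux f2' p (D2 - rim_star p D2)"
        using D2ne f2 by simp
      have eqs: "card (rim_star p D) = card (rim_star p D2)" "card (U_set p D) = card (U_set p D2)"
        "bg_aux f p (D - rim_star p D) = bg_aux f2' p (D2 - rim_star p D2)"
        using h(7) unfolding u1 u2 by simp_all
      note nA = next_props[OF A p1] and nB = next_props[OF B p1]
      have "D - rim_star p D = D2 - rim_star p D2"
      proof (rule Suc.IH[rule_format, OF nA(1,2) nB(1,2) _ _ eqs(3)])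
        show "card (D - rim_star p D) \<le> f" using nA(3) h(5) by simp
        show "card (D2 - rim_star p D2) \<le> f2'" using nB(3) h(6) f2 by simp
      qed
      then show ?thesis using one_step[OF A B p1 eqs(1,2)] by simp
    qed
  qed
qed

lemma diagram_downset:
  assumes "is_partition lam" shows "downset (diagram lam)"
proof -
  have sw: "sorted_wrt (\<ge>) lam" using assms unfolding is_partition_def by simp
  have sub: "diagram lam \<subseteq> {1..length lam} \<times> {1..sum_list lam}"
  proof
    fix z assume "z \<in> diagram lam"
    then obtain i j where z: "z = (i,j)" "1 \<le> i" "i \<le> length lam" "1 \<le> j" "j \<le> lam ! (i - 1)"
      unfolding diagram_def by auto
    have "lam ! (i - 1) \<le> sum_list lam" using z by (intro elem_le_sum_list) simp
    then show "z \<in> {1..length lam} \<times> {1..sum_list lam}" using z by auto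
  qed
  have fin: "finite (diagram lam)" using sub finite_subset by blast
  have dc: "(i',j') \<in> diagram lam" if "(i,j) \<in> diagram lam" "1 \<le> i'" "i' \<le> i" "1 \<le> j'" "j' \<le> j" for i j i' j'
  proof -
    have h: "1 \<le> i" "i \<le> length lam" "1 \<le> j" "j \<le> lam ! (i - 1)" using that(1) unfolding diagram_def by auto
    have "lam ! (i - 1) \<le> lam ! (i' - 1)"
    proof (cases "i' = i")
      case True then show ?thesis by simp
    next
      case False
      then have "i' - 1 < i - 1" using that h by simp
      then show ?thesis using sorted_wrt_nth_less[OF sw, of "i' - 1" "i - 1"] h by simp
    qed
    then show ?thesis using h that unfolding diagram_def by auto
  qed
  show ?thesis unfolding downset_def using fin dc by (auto simp: diagram_def)
qed

lemma diagram_symd: "self_conjugate lam \<Longrightarrow> symd (diagram lam)"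
  unfolding self_conjugate_def symd_def transp_diag_def by blast

lemma diagram_inj:
  assumes "is_partition lam" "is_partition mu" "diagram lam = diagram mu"
  shows "lam = mu"
proof -
  have col: "{i. (i,1) \<in> diagram xs} = {1..length xs}" if "is_partition xs" for xs
  proof -
    have "\<forall>x\<in>set xs. 1 \<le> x" using that unfolding is_partition_def by (metis less_one not_le)
    then show ?thesis unfolding diagram_def by (auto simp: all_set_conv_all_nth)
  qed
  have len: "length lam = length mu"
    using col[OF assms(1)] col[OF assms(2)] assms(3) by (metis card_atLeastAtMost diff_Suc_1)
  have row: "{j. (i,j) \<in> diagram xs} = {1..xs ! (i - 1)}" if "1 \<le> i" "i \<le> length xs" for xs i
    using that unfolding diagram_def by auto
  show ?thesis
  proof (rule nth_equalityI[OF len])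
    fix t assume t: "t < length lam"
    have a: "{j. (Suc t,j) \<in> diagram lam} = {1..lam ! t}" using row[of "Suc t" lam] t by simp
    have b: "{j. (Suc t,j) \<in> diagram mu} = {1..mu ! t}" using row[of "Suc t" mu] t len by simp
    have "{1..lam ! t} = {1..mu ! t}" unfolding a[symmetric] b[symmetric] using assms(3) by simp
    then show "lam ! t = mu ! t" by (metis card_atLeastAtMost diff_Suc_1)
  qed
qed

theorem proposition3p13:
  fixes p :: nat and lam mu :: "nat list"
  assumes "prime p" and "odd p"
    and "is_partition lam" and "is_partition mu"
    and "self_conjugate lam" and "self_conjugate mu"
    and "lam \<noteq> []" and "mu \<noteq> []"
    and "BG_symbol p lam = BG_symbol p mu"
  shows "lam = mu"
proof -
  have p1: "1 \<le> p" using assms(1) prime_ge_1_nat by blast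
  have "diagram lam = diagram mu"
    using bg_inj[OF p1, of "card (diagram lam)"] diagram_downset[OF assms(3)] diagram_downset[OF assms(4)]
      diagram_symd[OF assms(5)] diagram_symd[OF assms(6)] assms(9) unfolding BG_symbol_def by blast
  then show ?thesis using diagram_inj assms(3,4) by blast
qed

end
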